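(* Consider the asymptotic framework and setting in the context, and assume Conditions ASM and RSE hold. Fix $c>1$. Suppose $\lambda$ is chosen either as $\lambda=2c\sigma\sqrt n\,\Phi^{-1}(1-\alpha/2p)$ or as $\lambda=2c\sigma\Lambda(1-\alpha\mid X)$ with $\alpha=\alpha_n=o(1)$ and $\log(1/\alpha)\lesssim\log p$, or more generally so that $\lambda\lesssim_P\sigma\sqrt{n\log p}$ and $\lambda\geqslant c' n\|S\|_\infty$ with probability tending to one, for some constant $c'>1$. Then any LASSO solution $\widehat\beta$ satisfies $$\|\widehat\beta-\beta_0\|_{2,n}\lesssim_P\sigma\sqrt{\frac{s\log p}{n}}+c_s.$$
   Context: Asymptotic framework: all quantities are indexed by $n$, $n\to\infty$, $p=p_n\to\infty$, and $s=s_n$ may grow; $a\lesssim b$ means $a\leqslant Cb$ for a constant $C$ not depending on $n$, and $a\lesssim_P b$ means $a=O_P(b)$. Condition ASM: for each $n$ we observe $(y_i,z_i)$, $i=1,\dots,n$, $z_i$ fixed, $y_i=f(z_i)+\varepsilon_i$, $\varepsilon_i$ i.i.d. $N(0,\sigma^2)$. Write $f_i=f(z_i)$, $\mathbb{E}_n[a_i]=n^{-1}\sum_i a_i$, $x_i=P(z_i)\in\mathbb{R}^p$ (including a constant) with $\mathbb{E}_n[x_{ij}^2]=1$ for all $j$. $\beta_0$ is any solution of $\min_\beta\mathbb{E}_n[(f_i-x_i'\beta)^2]+\sigma^2\|\beta\|_0/n$; $s=\|\beta_0\|_0$, $T=\mathrm{support}(\beta_0)$, $r_i=f_i-x_i'\beta_0$,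 $c_s=\sqrt{\mathbb{E}_n[r_i^2]}\leqslant K\sigma\sqrt{s/n}$ for an absolute constant $K$. $\|\delta\|_{2,n}=\sqrt{\mathbb{E}_n[(x_i'\delta)^2]}$; $S=2\mathbb{E}_n[x_i\varepsilon_i]$; $\widehat Q(\beta)=\mathbb{E}_n[(y_i-x_i'\beta)^2]$; LASSO: $\widehat\beta\in\arg\min_\beta\widehat Q(\beta)+\frac\lambda n\|\beta\|_1$. Sparse eigenvalues: $\kappa(m)^2=\min\{\|\delta\|_{2,n}^2/\|\delta\|^2:\delta\neq0,\ \|\delta_{T^c}\|_0\leqslant m\}$, $\phi(m)=\max\{\|\delta\|_{2,n}^2/\|\delta\|^2:\delta\neq0,\ \|\delta_{T^c}\|_0\leqslant m\}$, $\mu(m)=\sqrt{\phi(m)}/\kappa(m)$, where $\delta_{T^c}$ is $\delta$ with entries in $T$ set to zero. Condition RSE: for $m=m_n=s\log n$, $\mu(m)\lesssim1$, $\phi(m)\lesssim1$, $1/\kappa(m)\lesssim1$. $\Phi$ is the standard normal cdf and $\Lambda(1-\alpha\mid X)$ is the $(1-\alpha)$-quantile of $n\|S/(2\sigma)\|_\infty$ conditional on $X=(x_1,\dots,x_n)'$. *)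

theory Defs
  imports "HOL-Probability.Probability"
begin

text \<open>Vectors in R^p are represented as functions nat => real vanishing off {..<p}.
  Observations are indexed by i < n, coordinates by j < p.\<close>

definition vecs :: "nat \<Rightarrow> (nat \<Rightarrow> real) set" where
  "vecs p = {b. \<forall>j\<ge>p. b j = 0}"

definition En :: "nat \<Rightarrow> (nat \<Rightarrow> real) \<Rightarrow> real" where
  "En n a = (\<Sum>i<n. a i) / real n"

definition xb :: "(nat \<Rightarrow> nat \<Rightarrow> real) \<Rightarrow> nat \<Rightarrow> nat \<Rightarrow> (nat \<Rightarrow> real) \<Rightarrow> real" where
  "xb x p i b = (\<Sum>j<p. x i j * b j)"

definition norm2n :: "nat \<Rightarrow> nat \<Rightarrow> (nat \<Rightarrow> nat \<Rightarrow> real) \<Rightarrow> (nat \<Rightarrow> real) \<Rightarrow> real" where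
  "norm2n n p x d = sqrt (En n (\<lambda>i. (xb x p i d)\<^sup>2))"

definition l2 :: "nat \<Rightarrow> (nat \<Rightarrow> real) \<Rightarrow> real" where
  "l2 p d = sqrt (\<Sum>j<p. (d j)\<^sup>2)"

definition l1 :: "nat \<Rightarrow> (nat \<Rightarrow> real) \<Rightarrow> real" where
  "l1 p d = (\<Sum>j<p. \<bar>d j\<bar>)"

definition linf :: "nat \<Rightarrow> (nat \<Rightarrow> real) \<Rightarrow> real" where
  "linf p d = Max (insert 0 ((\<lambda>j. \<bar>d j\<bar>) ` {..<p}))"

definition supp :: "nat \<Rightarrow> (nat \<Rightarrow> real) \<Rightarrow> nat set" where
  "supp p d = {j. j < p \<and> d j \<noteq> 0}"

definition l0 :: "nat \<Rightarrow> (nat \<Rightarrow> real) \<Rightarrow> nat" where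
  "l0 p d = card (supp p d)"

definition ratios :: "nat \<Rightarrow> nat \<Rightarrow> (nat \<Rightarrow> nat \<Rightarrow> real) \<Rightarrow> nat set \<Rightarrow> real \<Rightarrow> real set" where
  "ratios n p x T m = {(norm2n n p x d)\<^sup>2 / (l2 p d)\<^sup>2 | d.
       d \<in> vecs p \<and> d \<noteq> (\<lambda>_. 0) \<and> real (card (supp p d - T)) \<le> m}"

definition kappa :: "nat \<Rightarrow> nat \<Rightarrow> (nat \<Rightarrow> nat \<Rightarrow> real) \<Rightarrow> nat set \<Rightarrow> real \<Rightarrow> real" where
  "kappa n p x T m = sqrt (Inf (ratios n p x T m))"

definition phi :: "nat \<Rightarrow> nat \<Rightarrow> (nat \<Rightarrow> nat \<Rightarrow> real) \<Rightarrow> nat set \<Rightarrow> real \<Rightarrow> real" where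
  "phi n p x T m = Sup (ratios n p x T m)"

definition mu :: "nat \<Rightarrow> nat \<Rightarrow> (nat \<Rightarrow> nat \<Rightarrow> real) \<Rightarrow> nat set \<Rightarrow> real \<Rightarrow> real" where
  "mu n p x T m = sqrt (phi n p x T m) / kappa n p x T m"

definition Qhat :: "nat \<Rightarrow> nat \<Rightarrow> (nat \<Rightarrow> nat \<Rightarrow> real) \<Rightarrow> (nat \<Rightarrow> real) \<Rightarrow> (nat \<Rightarrow> real) \<Rightarrow> real" where
  "Qhat n p x y b = En n (\<lambda>i. (y i - xb x p i b)\<^sup>2)"

definition lasso_sol :: "nat \<Rightarrow> nat \<Rightarrow> (nat \<Rightarrow> nat \<Rightarrow> real) \<Rightarrow> (nat \<Rightarrow> real) \<Rightarrow> real \<Rightarrow> (nat \<Rightarrow> real) \<Rightarrow> bool" where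
  "lasso_sol n p x y lam b \<longleftrightarrow> b \<in> vecs p \<and>
     (\<forall>b'\<in>vecs p. Qhat n p x y b + lam / real n * l1 p b \<le> Qhat n p x y b' + lam / real n * l1 p b')"

definition oracle_sol :: "nat \<Rightarrow> nat \<Rightarrow> (nat \<Rightarrow> nat \<Rightarrow> real) \<Rightarrow> (nat \<Rightarrow> real) \<Rightarrow> real \<Rightarrow> (nat \<Rightarrow> real) \<Rightarrow> bool" where
  "oracle_sol n p x f sig b \<longleftrightarrow> b \<in> vecs p \<and>
     (\<forall>b'\<in>vecs p. Qhat n p x f b + sig\<^sup>2 * real (l0 p b) / real n
                 \<le> Qhat n p x f b' + sig\<^sup>2 * real (l0 p b') / real n)"

definition Svec :: "nat \<Rightarrow> (nat \<Rightarrow> nat \<Rightarrow> real) \<Rightarrow> (nat \<Rightarrow> real) \<Rightarrow> nat \<Rightarrow> real" where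
  "Svec n x e j = 2 * En n (\<lambda>i. x i j * e i)"

definition Phi :: "real \<Rightarrow> real" where
  "Phi t = measure (density lborel (\<lambda>u. ennreal (std_normal_density u))) {..t}"

definition Phi_inv :: "real \<Rightarrow> real" where
  "Phi_inv q = Inf {t. q \<le> Phi t}"

text \<open>Lambda(q | X): q-quantile of n ||S/(2 sig)||_inf (X is fixed, so this is the
  unconditional quantile under the model probability M).\<close>
definition Lambda_q :: "'a measure \<Rightarrow> nat \<Rightarrow> nat \<Rightarrow> (nat \<Rightarrow> nat \<Rightarrow> real) \<Rightarrow> real \<Rightarrow> (nat \<Rightarrow> 'a \<Rightarrow> real) \<Rightarrow> real \<Rightarrow> real" where
  "Lambda_q M n p x sig eps q = Inf {t. q \<le> measure M
      {\<omega> \<in> space M. real n * linf p (\<lambda>j. Svec n x (\<lambda>i. eps i \<omega>) j / (2 * sig)) \<le> t}}"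

text \<open>Stochastic boundedness X_n = O_P(b_n) (stated with inner probability, so no
  measurability of X_n is required) and "with probability tending to one".\<close>
definition bigOP :: "(nat \<Rightarrow> 'a measure) \<Rightarrow> (nat \<Rightarrow> 'a \<Rightarrow> real) \<Rightarrow> (nat \<Rightarrow> real) \<Rightarrow> bool" where
  "bigOP M X b \<longleftrightarrow> (\<forall>e>0. \<exists>C N. \<forall>n\<ge>N. \<exists>A\<in>sets (M n).
       1 - e \<le> measure (M n) A \<and> (\<forall>\<omega>\<in>A. \<bar>X n \<omega>\<bar> \<le> C * b n))"

definition whp :: "(nat \<Rightarrow> 'a measure) \<Rightarrow> (nat \<Rightarrow> 'a \<Rightarrow> bool) \<Rightarrow> bool" where
  "whp M P \<longleftrightarrow> (\<forall>e>0. \<exists>N. \<forall>n\<ge>N. \<exists>A\<in>sets (M n).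
       1 - e \<le> measure (M n) A \<and> (\<forall>\<omega>\<in>A. P n \<omega>))"

end

theory Submission
  imports Defs
begin


lemma xb_add: "xb x p i (\<lambda>j. a j + b j) = xb x p i a + xb x p i b"
  unfolding xb_def by (simp add: distrib_left sum.distrib)

lemma xb_diff: "xb x p i (\<lambda>j. a j - b j) = xb x p i a - xb x p i b"
  unfolding xb_def by (simp add: right_diff_distrib sum_subtractf)

lemma En_nonneg: "(\<And>i. i < n \<Longrightarrow> 0 \<le> a i) \<Longrightarrow> 0 \<le> En n a"
  unfolding En_def by (auto intro!: divide_nonneg_nonneg sum_nonneg)

lemma norm2n_alt: "norm2n n p x d = L2_set (\<lambda>i. xb x p i d) {..<n} / sqrt (real n)"
  unfolding norm2n_def En_def L2_set_def by (simp add: real_sqrt_divide)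

lemma norm2n_nonneg: "0 \<le> norm2n n p x d"
  unfolding norm2n_def using En_nonneg[of n "\<lambda>i. (xb x p i d)\<^sup>2"] by simp

lemma norm2n_sq: "(norm2n n p x d)\<^sup>2 = En n (\<lambda>i. (xb x p i d)\<^sup>2)"
  unfolding norm2n_def using En_nonneg[of n "\<lambda>i. (xb x p i d)\<^sup>2"] by simp

lemma norm2n_triangle: "norm2n n p x (\<lambda>j. a j + b j) \<le> norm2n n p x a + norm2n n p x b"
  unfolding norm2n_alt xb_add
  using L2_set_triangle_ineq[of "\<lambda>i. xb x p i a" "\<lambda>i. xb x p i b" "{..<n}"]
  by (simp add: divide_right_mono add_divide_distrib[symmetric])

lemma norm2n_diff_ge: "norm2n n p x a - norm2n n p x b \<le> norm2n n p x (\<lambda>j. a j - b j)"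
proof -
  have "norm2n n p x a = norm2n n p x (\<lambda>j. (a j - b j) + b j)" by simp
  also have "\<dots> \<le> norm2n n p x (\<lambda>j. a j - b j) + norm2n n p x b" by (rule norm2n_triangle)
  finally show ?thesis by simp
qed

lemma l2_alt: "l2 p d = L2_set d {..<p}"
  unfolding l2_def L2_set_def by simp

lemma xb_sq_le: "(xb x p i d)\<^sup>2 \<le> (\<Sum>j<p. (x i j)\<^sup>2) * (l2 p d)\<^sup>2"
proof -
  have "\<bar>xb x p i d\<bar> \<le> (\<Sum>j<p. \<bar>x i j\<bar> * \<bar>d j\<bar>)"
    unfolding xb_def by (rule order_trans[OF sum_abs]) (simp add: abs_mult)
  also have "\<dots> \<le> L2_set (x i) {..<p} * l2 p d"
    unfolding l2_alt by (rule L2_set_mult_ineq)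
  finally have "\<bar>xb x p i d\<bar> \<le> L2_set (x i) {..<p} * l2 p d" .
  hence "(xb x p i d)\<^sup>2 \<le> (L2_set (x i) {..<p} * l2 p d)\<^sup>2"
    by (metis abs_ge_zero order_trans power2_abs power_mono)
  thus ?thesis unfolding power_mult_distrib L2_set_def l2_def
    by (simp add: sum_nonneg)
qed

lemma norm2n_sq_le_p:
  assumes "n \<ge> 1" and "\<And>j. j < p \<Longrightarrow> En n (\<lambda>i. (x i j)\<^sup>2) = 1"
  shows "(norm2n n p x d)\<^sup>2 \<le> real p * (l2 p d)\<^sup>2"
proof -
  have "(\<Sum>i<n. (xb x p i d)\<^sup>2) \<le> (\<Sum>i<n. (\<Sum>j<p. (x i j)\<^sup>2) * (l2 p d)\<^sup>2)"
    by (rule sum_mono) (rule xb_sq_le)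
  also have "\<dots> = (\<Sum>j<p. (\<Sum>i<n. (x i j)\<^sup>2)) * (l2 p d)\<^sup>2"
    by (simp add: sum_distrib_right[symmetric] sum.swap[of _ "{..<n}"])
  also have "(\<Sum>j<p. (\<Sum>i<n. (x i j)\<^sup>2)) = (\<Sum>j<p. real n)"
  proof (rule sum.cong)
    fix j assume "j \<in> {..<p}"
    with assms(2)[of j] assms(1) show "(\<Sum>i<n. (x i j)\<^sup>2) = real n"
      unfolding En_def by (simp add: field_simps)
  qed simp
  finally have "(\<Sum>i<n. (xb x p i d)\<^sup>2) \<le> real p * real n * (l2 p d)\<^sup>2" by simp
  thus ?thesis using assms(1) unfolding norm2n_sq En_def
    by (simp add: field_simps)
qed



lemma l2_pos: assumes "d \<in> vecs p" "d \<noteq> (\<lambda>_. 0)" shows "0 < l2 p d"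
proof -
  obtain j where j: "d j \<noteq> 0" using assms(2) by auto
  have jp: "j < p"
  proof (rule ccontr)
    assume "\<not> j < p" thus False using assms(1) j unfolding vecs_def by auto
  qed
  have "0 < (d j)\<^sup>2" using j by simp
  also have "(d j)\<^sup>2 \<le> (\<Sum>j<p. (d j)\<^sup>2)"
    by (rule member_le_sum) (use jp in auto)
  finally show ?thesis unfolding l2_def by simp
qed

lemma xb_zero: "xb x p i (\<lambda>_. 0) = 0" unfolding xb_def by simp

lemma norm2n_zero: "norm2n n p x (\<lambda>_. 0) = 0"
  unfolding norm2n_def En_def xb_zero by simp

lemma ratio_bounds:
  assumes n1: "n \<ge> 1" and nrm: "\<And>j. j < p \<Longrightarrow> En n (\<lambda>i. (x i j)\<^sup>2) = 1"
    and kpos: "0 < kappa n p x T m"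
    and d: "d \<in> vecs p" and card: "real (card (supp p d - T)) \<le> m"
  shows "kappa n p x T m * l2 p d \<le> norm2n n p x d"
    and "norm2n n p x d \<le> sqrt (phi n p x T m) * l2 p d"
proof -
  have "(kappa n p x T m * l2 p d \<le> norm2n n p x d) \<and>
        (norm2n n p x d \<le> sqrt (phi n p x T m) * l2 p d)"
  proof (cases "d = (\<lambda>_. 0)")
    case True
    thus ?thesis by (simp add: norm2n_zero l2_def)
  next
    case False
    have l2p: "0 < l2 p d" by (rule l2_pos[OF d False])
    define r where "r = (norm2n n p x d)\<^sup>2 / (l2 p d)\<^sup>2"
    have rin: "r \<in> ratios n p x T m" unfolding ratios_def r_def using d False card by blast
    have bb: "bdd_below (ratios n p x T m)"
      unfolding ratios_def by (rule bdd_belowI[of _ 0]) auto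
    have ba: "bdd_above (ratios n p x T m)"
    proof (rule bdd_aboveI[of _ "real p"])
      fix y assume "y \<in> ratios n p x T m"
      then obtain d' where y: "y = (norm2n n p x d')\<^sup>2 / (l2 p d')\<^sup>2"
        and d': "d' \<in> vecs p" "d' \<noteq> (\<lambda>_. 0)" unfolding ratios_def by blast
      have "0 < (l2 p d')\<^sup>2" using l2_pos[OF d'] by simp
      thus "y \<le> real p" unfolding y using norm2n_sq_le_p[OF n1 nrm, where d=d']
        by (simp only: pos_divide_le_eq)
    qed
    have infle: "Inf (ratios n p x T m) \<le> r" by (rule cInf_lower[OF rin bb])
    have supge: "r \<le> Sup (ratios n p x T m)" by (rule cSup_upper[OF rin ba])
    have inf0: "0 < Inf (ratios n p x T m)" using kpos unfolding kappa_def by simp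
    have ksq: "(kappa n p x T m)\<^sup>2 = Inf (ratios n p x T m)"
      unfolding kappa_def using inf0 by simp
    have "(kappa n p x T m * l2 p d)\<^sup>2 \<le> (norm2n n p x d)\<^sup>2"
    proof -
      have "0 < (l2 p d)\<^sup>2" using l2p by simp
      thus ?thesis using infle unfolding power_mult_distrib ksq r_def by (simp only: pos_le_divide_eq)
    qed
    hence 1: "kappa n p x T m * l2 p d \<le> norm2n n p x d"
      using norm2n_nonneg by (rule power2_le_imp_le)
    have r0: "0 \<le> r" unfolding r_def by simp
    have phi0: "0 \<le> phi n p x T m" unfolding phi_def using r0 supge by linarith
    have eq: "(norm2n n p x d)\<^sup>2 = r * (l2 p d)\<^sup>2" unfolding r_def using l2p by simp
    have "(norm2n n p x d)\<^sup>2 \<le> phi n p x T m * (l2 p d)\<^sup>2"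
      unfolding eq by (rule mult_right_mono) (use supge in \<open>simp_all add: phi_def\<close>)
    hence "sqrt ((norm2n n p x d)\<^sup>2) \<le> sqrt (phi n p x T m * (l2 p d)\<^sup>2)"
      by (rule real_sqrt_le_mono)
    hence 2: "norm2n n p x d \<le> sqrt (phi n p x T m) * l2 p d"
      using l2p norm2n_nonneg[of n p x d] by (simp add: real_sqrt_mult)
    show ?thesis using 1 2 by blast
  qed
  thus "kappa n p x T m * l2 p d \<le> norm2n n p x d"
    and "norm2n n p x d \<le> sqrt (phi n p x T m) * l2 p d" by auto
qed



definition rst :: "nat set \<Rightarrow> (nat \<Rightarrow> real) \<Rightarrow> nat \<Rightarrow> real" where
  "rst U d = (\<lambda>j. if j \<in> U then d j else 0)"

lemma topk:
  fixes g :: "nat \<Rightarrow> real"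
  assumes "finite U"
  shows "\<exists>B\<subseteq>U. card B = min k (card U) \<and> (\<forall>b\<in>B. \<forall>r\<in>U-B. g r \<le> g b)"
proof (induction k)
  case 0
  show ?case by (rule exI[of _ "{}"]) simp
next
  case (Suc k)
  then obtain B where B: "B \<subseteq> U" "card B = min k (card U)" "\<forall>b\<in>B. \<forall>r\<in>U-B. g r \<le> g b"
    by blast
  have fB: "finite B" using B(1) assms finite_subset by blast
  show ?case
  proof (cases "U - B = {}")
    case True
    hence "B = U" using B(1) by blast
    thus ?thesis using B by (intro exI[of _ B]) auto
  next
    case False
    have fUB: "finite (U - B)" using assms by simp
    have "Max (g ` (U - B)) \<in> g ` (U - B)" by (rule Max_in) (use fUB False in auto)
    then obtain r0 where r00: "r0 \<in> U - B" "g r0 = Max (g ` (U - B))" by auto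
    have r0: "r0 \<in> U - B" "\<forall>r\<in>U-B. g r \<le> g r0"
      using r00 fUB by auto
    have "B \<subset> U" using B(1) False by blast
    hence "card B < card U" by (rule psubset_card_mono[OF assms])
    hence ck: "card B = k" using B(2) by linarith
    have "card (insert r0 B) = Suc k" using r0(1) fB ck by simp
    moreover have "Suc k \<le> card U"
      using \<open>card B < card U\<close> ck by simp
    moreover have "insert r0 B \<subseteq> U" using r0 B by auto
    moreover have "\<forall>b\<in>insert r0 B. \<forall>r\<in>U - insert r0 B. g r \<le> g b"
      using r0 B(3) by auto
    ultimately show ?thesis by (intro exI[of _ "insert r0 B"]) auto
  qed
qed

lemma sum_lessThan_restrict:
  fixes p :: nat and f :: "nat \<Rightarrow> 'b::comm_monoid_add"
  assumes "W \<subseteq> {..<p}" "\<And>j. j \<notin> W \<Longrightarrow> f j = 0"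
  shows "(\<Sum>j<p. f j) = (\<Sum>j\<in>W. f j)"
proof (rule sum.mono_neutral_right)
  show "finite {..<p}" by simp
  show "W \<subseteq> {..<p}" by fact
  show "\<forall>i\<in>{..<p} - W. f i = 0" using assms(2) by blast
qed

lemma l1_restrict:
  assumes "W \<subseteq> {..<p}" "\<And>j. j \<notin> W \<Longrightarrow> w j = 0"
  shows "l1 p w = (\<Sum>j\<in>W. \<bar>w j\<bar>)"
  unfolding l1_def by (rule sum_lessThan_restrict) (use assms in auto)

lemma l2_restrict_bound:
  assumes "W \<subseteq> {..<p}" "\<And>j. j \<notin> W \<Longrightarrow> w j = 0" "\<And>j. j \<in> W \<Longrightarrow> \<bar>w j\<bar> \<le> t"
  shows "l2 p w \<le> sqrt (real (card W)) * t"
proof -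
  have t0: "0 \<le> t" if "W \<noteq> {}" using that assms(3) by (meson abs_ge_zero all_not_in_conv order_trans)
  have "(\<Sum>j<p. (w j)\<^sup>2) = (\<Sum>j\<in>W. (w j)\<^sup>2)"
    by (rule sum_lessThan_restrict) (use assms in auto)
  also have "\<dots> \<le> (\<Sum>j\<in>W. t\<^sup>2)"
    by (rule sum_mono) (metis abs_ge_zero assms(3) power2_abs power_mono)
  also have "\<dots> = real (card W) * t\<^sup>2" by simp
  finally have "sqrt (\<Sum>j<p. (w j)\<^sup>2) \<le> sqrt (real (card W) * t\<^sup>2)" by (rule real_sqrt_le_mono)
  also have "\<dots> = sqrt (real (card W)) * t" 
  proof (cases "W = {}")
    case True thus ?thesis by simp
  next
    case False thus ?thesis using t0 by (simp add: real_sqrt_mult)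
  qed
  finally show ?thesis unfolding l2_def .
qed

lemma vecs_of_restrict:
  assumes "W \<subseteq> {..<p}" "\<And>j. j \<notin> W \<Longrightarrow> w j = 0"
  shows "w \<in> vecs p"
  unfolding vecs_def
proof (intro CollectI allI impI)
  fix j assume "p \<le> j"
  hence "j \<notin> W" using assms(1) by auto
  thus "w j = 0" by (rule assms(2))
qed

lemma supp_sub:
  assumes "\<And>j. j \<notin> W \<Longrightarrow> w j = 0"
  shows "supp p w \<subseteq> W"
  unfolding supp_def using assms by auto

lemma block_bound:
  assumes k1: "k \<ge> 1" and g0: "0 \<le> \<gamma>"
    and hi: "\<And>d. d \<in> vecs p \<Longrightarrow> card (supp p d - T) \<le> k \<Longrightarrow> norm2n n p x d \<le> \<gamma> * l2 p d"
  shows "U \<subseteq> {..<p} - T \<Longrightarrow> (\<And>j. j \<notin> U \<Longrightarrow> v j = 0) \<Longrightarrow> 0 \<le> t \<Longrightarrow>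
      (\<And>j. j \<in> U \<Longrightarrow> \<bar>v j\<bar> \<le> t) \<Longrightarrow>
      norm2n n p x v \<le> \<gamma> * (sqrt (real k) * t + l1 p v / sqrt (real k))"
proof (induction "card U" arbitrary: U v t rule: less_induct)
  case less
  have Up: "U \<subseteq> {..<p}" using less.prems(1) by auto
  have fU: "finite U" using Up finite_subset by blast
  have l10: "0 \<le> l1 p v" unfolding l1_def by (simp add: sum_nonneg)
  have sk: "0 < sqrt (real k)" using k1 by simp
  show ?case
  proof (cases "card U \<le> k")
    case True
    have "card (supp p v - T) \<le> card U"
      by (rule card_mono[OF fU]) (use supp_sub[of U v p, OF less.prems(2)] in auto)
    hence "norm2n n p x v \<le> \<gamma> * l2 p v"
      using True by (intro hi vecs_of_restrict[OF Up less.prems(2)]) auto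
    also have "\<dots> \<le> \<gamma> * (sqrt (real (card U)) * t)"
      by (rule mult_left_mono[OF l2_restrict_bound[OF Up less.prems(2,4)] g0])
    also have "\<dots> \<le> \<gamma> * (sqrt (real k) * t)"
      using True less.prems(3) g0 by (intro mult_left_mono mult_right_mono) auto
    also have "\<dots> \<le> \<gamma> * (sqrt (real k) * t + l1 p v / sqrt (real k))"
      using l10 sk g0 by (intro mult_left_mono) auto
    finally show ?thesis .
  next
    case False
    obtain B where B: "B \<subseteq> U" "card B = min k (card U)" "\<forall>b\<in>B. \<forall>r\<in>U-B. \<bar>v r\<bar> \<le> \<bar>v b\<bar>"
      using topk[OF fU, where k=k and g="\<lambda>j. \<bar>v j\<bar>"] by blast
    have cB: "card B = k" using B(2) False by simp
    define R where "R = U - B"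
    define vB where "vB = rst B v"
    define vR where "vR = rst R v"
    define t' where "t' = l1 p vB / real k"
    have Bp: "B \<subseteq> {..<p}" using B(1) Up by auto
    have Rp: "R \<subseteq> {..<p}" using Up unfolding R_def by auto
    have vB0: "\<And>j. j \<notin> B \<Longrightarrow> vB j = 0" unfolding vB_def rst_def by simp
    have vR0: "\<And>j. j \<notin> R \<Longrightarrow> vR j = 0" unfolding vR_def rst_def by simp
    have split: "v = (\<lambda>j. vB j + vR j)"
    proof (rule ext)
      fix j show "v j = vB j + vR j"
      proof (cases "j \<in> U")
        case True thus ?thesis unfolding vB_def vR_def rst_def R_def by auto
      next
        case False thus ?thesis using less.prems(2)[of j] B(1) unfolding vB_def vR_def rst_def R_def by auto
      qed
    qed
    have l1B: "l1 p vB = (\<Sum>j\<in>B. \<bar>v j\<bar>)"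
      using l1_restrict[OF Bp vB0] unfolding vB_def rst_def by simp
    have l1R: "l1 p vR = (\<Sum>j\<in>R. \<bar>v j\<bar>)"
      using l1_restrict[OF Rp vR0] unfolding vR_def rst_def by simp
    have l1v: "l1 p v = l1 p vB + l1 p vR"
    proof -
      have "l1 p v = (\<Sum>j\<in>U. \<bar>v j\<bar>)" by (rule l1_restrict[OF Up less.prems(2)])
      also have "\<dots> = (\<Sum>j\<in>B. \<bar>v j\<bar>) + (\<Sum>j\<in>R. \<bar>v j\<bar>)"
        using sum.subset_diff[OF B(1) fU, of "\<lambda>j. \<bar>v j\<bar>"] unfolding R_def by simp
      finally show ?thesis using l1B l1R by simp
    qed
    have t'0: "0 \<le> t'" unfolding t'_def l1_def by (simp add: sum_nonneg)
    have "card R = card U - card B" unfolding R_def using B(1) fU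
      by (simp add: card_Diff_subset finite_subset)
    hence cR: "card R < card U" using cB k1 False by linarith
    have RT: "R \<subseteq> {..<p} - T" using less.prems(1) unfolding R_def by auto
    have tR: "\<bar>vR j\<bar> \<le> t'" if "j \<in> R" for j
    proof -
      have "(\<Sum>b\<in>B. \<bar>v j\<bar>) \<le> (\<Sum>b\<in>B. \<bar>v b\<bar>)"
        by (rule sum_mono) (use B(3) that in \<open>auto simp: R_def\<close>)
      hence "real k * \<bar>v j\<bar> \<le> l1 p vB" using cB l1B by simp
      thus ?thesis using that k1 unfolding t'_def vR_def rst_def by (simp add: field_simps)
    qed
    have IH: "norm2n n p x vR \<le> \<gamma> * (sqrt (real k) * t' + l1 p vR / sqrt (real k))"
      by (rule less.hyps[OF cR RT vR0 t'0 tR])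
    have "card (supp p vB - T) \<le> card B"
      by (rule card_mono) (use fU B(1) finite_subset supp_sub[of B vB p, OF vB0] in auto)
    hence "norm2n n p x vB \<le> \<gamma> * l2 p vB"
      using cB by (intro hi vecs_of_restrict[OF Bp vB0]) auto
    also have "\<dots> \<le> \<gamma> * (sqrt (real (card B)) * t)"
      by (rule mult_left_mono[OF l2_restrict_bound[OF Bp vB0] g0])
         (use less.prems(4) B(1) in \<open>auto simp: vB_def rst_def\<close>)
    finally have nB: "norm2n n p x vB \<le> \<gamma> * (sqrt (real k) * t)" using cB by simp
    have "norm2n n p x v \<le> norm2n n p x vB + norm2n n p x vR"
      using norm2n_triangle[of n p x vB vR] split by simp
    also have "\<dots> \<le> \<gamma> * (sqrt (real k) * t) + \<gamma> * (sqrt (real k) * t' + l1 p vR / sqrt (real k))"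
      using nB IH by linarith
    also have "sqrt (real k) * t' = l1 p vB / sqrt (real k)"
    proof -
      have kk: "sqrt (real k) * sqrt (real k) = real k" by simp
      have "l1 p vB / sqrt (real k) = l1 p vB * sqrt (real k) / (sqrt (real k) * sqrt (real k))"
        using sk by (simp add: field_simps)
      thus ?thesis unfolding kk t'_def by simp
    qed
    finally show ?thesis using l1v by (simp add: distrib_left add_divide_distrib)
  qed
qed



lemma xb_uminus: "xb x p i (\<lambda>j. - a j) = - xb x p i a"
  unfolding xb_def by (simp add: sum_negf)

lemma norm2n_uminus: "norm2n n p x (\<lambda>j. - a j) = norm2n n p x a"
  unfolding norm2n_def xb_uminus by simp

lemma L1_le_sqrt_card_L2:
  fixes d :: "nat \<Rightarrow> real"
  shows "(\<Sum>j\<in>T. \<bar>d j\<bar>) \<le> sqrt (real (card T)) * L2_set d T"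
proof -
  have "(\<Sum>j\<in>T. \<bar>d j\<bar>) = (\<Sum>j\<in>T. \<bar>d j\<bar> * \<bar>(\<lambda>_. 1::real) j\<bar>)" by simp
  also have "\<dots> \<le> L2_set d T * L2_set (\<lambda>_. 1::real) T" by (rule L2_set_mult_ineq)
  also have "L2_set (\<lambda>_. 1::real) T = sqrt (real (card T))" by (simp add: L2_set_constant)
  finally show ?thesis by (simp add: mult.commute)
qed

lemma re_bound:
  assumes k1: "k \<ge> 1" and g0: "0 \<le> \<gamma>" and kap0: "0 \<le> \<kappa>" and cb0: "0 \<le> cb"
    and lo: "\<And>d. d \<in> vecs p \<Longrightarrow> card (supp p d - T) \<le> k \<Longrightarrow> \<kappa> * l2 p d \<le> norm2n n p x d"
    and hi: "\<And>d. d \<in> vecs p \<Longrightarrow> card (supp p d - T) \<le> k \<Longrightarrow> norm2n n p x d \<le> \<gamma> * l2 p d"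
    and Tp: "T \<subseteq> {..<p}" and dv: "\<delta> \<in> vecs p"
    and cone: "(\<Sum>j\<in>{..<p}-T. \<bar>\<delta> j\<bar>) \<le> cb * (\<Sum>j\<in>T. \<bar>\<delta> j\<bar>)"
  shows "(\<kappa> - \<gamma> * cb * sqrt (real (card T) / real k)) * L2_set \<delta> T \<le> norm2n n p x \<delta>"
proof -
  define U where "U = {..<p} - T"
  have fU: "finite U" unfolding U_def by simp
  obtain B where B: "B \<subseteq> U" "card B = min k (card U)" "\<forall>b\<in>B. \<forall>r\<in>U-B. \<bar>\<delta> r\<bar> \<le> \<bar>\<delta> b\<bar>"
    using topk[OF fU, where k=k and g="\<lambda>j. \<bar>\<delta> j\<bar>"] by blast
  define R where "R = U - B"
  define W where "W = T \<union> B"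
  define dW where "dW = rst W \<delta>"
  define dR where "dR = rst R \<delta>"
  define dB where "dB = rst B \<delta>"
  define t' where "t' = l1 p dB / real k"
  have Wp: "W \<subseteq> {..<p}" unfolding W_def using Tp B(1) U_def by auto
  have Rp: "R \<subseteq> {..<p}" unfolding R_def U_def by auto
  have Bp: "B \<subseteq> {..<p}" using B(1) unfolding U_def by auto
  have RT: "R \<subseteq> {..<p} - T" unfolding R_def U_def by auto
  have dW0: "\<And>j. j \<notin> W \<Longrightarrow> dW j = 0" unfolding dW_def rst_def by simp
  have dR0: "\<And>j. j \<notin> R \<Longrightarrow> dR j = 0" unfolding dR_def rst_def by simp
  have dB0: "\<And>j. j \<notin> B \<Longrightarrow> dB j = 0" unfolding dB_def rst_def by simp
  have split: "(\<lambda>j. \<delta> j + - dR j) = dW"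
  proof (rule ext)
    fix j show "\<delta> j + - dR j = dW j"
    proof (cases "j < p")
      case True thus ?thesis unfolding dW_def dR_def rst_def W_def R_def U_def by auto
    next
      case False
      hence "\<delta> j = 0" using dv unfolding vecs_def by auto
      thus ?thesis unfolding dW_def dR_def rst_def by auto
    qed
  qed
  have n1: "norm2n n p x dW \<le> norm2n n p x \<delta> + norm2n n p x dR"
    using norm2n_triangle[of n p x \<delta> "\<lambda>j. - dR j"] unfolding split norm2n_uminus .
  have fB: "finite B" using fU B(1) finite_subset by blast
  have "card (supp p dW - T) \<le> card B"
    by (rule card_mono[OF fB]) (use supp_sub[of W dW p, OF dW0] W_def in auto)
  also have "\<dots> \<le> k" using B(2) by simp
  finally have cW: "card (supp p dW - T) \<le> k" .
  have lW: "\<kappa> * l2 p dW \<le> norm2n n p x dW" by (rule lo[OF vecs_of_restrict[OF Wp dW0] cW])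
  have "L2_set \<delta> T = sqrt (\<Sum>j\<in>T. (dW j)\<^sup>2)"
    unfolding L2_set_def dW_def rst_def W_def by simp
  also have "\<dots> \<le> sqrt (\<Sum>j<p. (dW j)\<^sup>2)"
    by (rule real_sqrt_le_mono, rule sum_mono2) (use Tp in auto)
  finally have L2T: "L2_set \<delta> T \<le> l2 p dW" unfolding l2_def .
  have t'0: "0 \<le> t'" unfolding t'_def l1_def by (simp add: sum_nonneg)
  have tR: "\<bar>dR j\<bar> \<le> t'" if "j \<in> R" for j
  proof -
    have "R \<noteq> {}" using that by auto
    hence "card B = k" using B(2) B(1) fU unfolding R_def
      by (metis Diff_eq_empty_iff card_seteq min_def nle_le)
    have "(\<Sum>b\<in>B. \<bar>\<delta> j\<bar>) \<le> (\<Sum>b\<in>B. \<bar>\<delta> b\<bar>)"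
      by (rule sum_mono) (use B(3) that in \<open>auto simp: R_def\<close>)
    moreover have "l1 p dB = (\<Sum>b\<in>B. \<bar>\<delta> b\<bar>)"
      using l1_restrict[OF Bp dB0] unfolding dB_def rst_def by simp
    ultimately have "real k * \<bar>\<delta> j\<bar> \<le> l1 p dB" using \<open>card B = k\<close> by simp
    thus ?thesis using that k1 unfolding t'_def dR_def rst_def by (simp add: field_simps)
  qed
  have nR: "norm2n n p x dR \<le> \<gamma> * (sqrt (real k) * t' + l1 p dR / sqrt (real k))"
    by (rule block_bound[OF k1 g0 hi RT dR0 t'0 tR]) auto
  have sk: "0 < sqrt (real k)" using k1 by simp
  have kk: "sqrt (real k) * t' = l1 p dB / sqrt (real k)"
  proof -
    have kk: "sqrt (real k) * sqrt (real k) = real k" by simp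
    have "l1 p dB / sqrt (real k) = l1 p dB * sqrt (real k) / (sqrt (real k) * sqrt (real k))"
      using sk by (simp add: field_simps)
    thus ?thesis unfolding kk t'_def by simp
  qed
  have l1U: "l1 p dB + l1 p dR = (\<Sum>j\<in>{..<p}-T. \<bar>\<delta> j\<bar>)"
  proof -
    have a: "l1 p dB = (\<Sum>j\<in>B. \<bar>\<delta> j\<bar>)"
      using l1_restrict[OF Bp dB0] unfolding dB_def rst_def by simp
    have b: "l1 p dR = (\<Sum>j\<in>R. \<bar>\<delta> j\<bar>)"
      using l1_restrict[OF Rp dR0] unfolding dR_def rst_def by simp
    have "(\<Sum>j\<in>U. \<bar>\<delta> j\<bar>) = (\<Sum>j\<in>U - B. \<bar>\<delta> j\<bar>) + (\<Sum>j\<in>B. \<bar>\<delta> j\<bar>)"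
      by (rule sum.subset_diff[OF B(1) fU])
    thus ?thesis using a b unfolding R_def U_def by simp
  qed
  have "norm2n n p x dR \<le> \<gamma> * ((\<Sum>j\<in>{..<p}-T. \<bar>\<delta> j\<bar>) / sqrt (real k))"
    using nR unfolding kk l1U[symmetric] by (simp add: add_divide_distrib)
  also have "\<dots> \<le> \<gamma> * (cb * (\<Sum>j\<in>T. \<bar>\<delta> j\<bar>) / sqrt (real k))"
    using cone g0 sk by (intro mult_left_mono divide_right_mono) auto
  also have "\<dots> \<le> \<gamma> * (cb * (sqrt (real (card T)) * L2_set \<delta> T) / sqrt (real k))"
    using g0 sk cb0 L1_le_sqrt_card_L2[of \<delta> T]
    by (intro mult_left_mono divide_right_mono) auto
  also have "\<dots> = \<gamma> * cb * sqrt (real (card T) / real k) * L2_set \<delta> T"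
    by (simp add: real_sqrt_divide)
  finally have nR2: "norm2n n p x dR \<le> \<gamma> * cb * sqrt (real (card T) / real k) * L2_set \<delta> T" .
  have "\<kappa> * L2_set \<delta> T \<le> \<kappa> * l2 p dW" using L2T kap0 by (rule mult_left_mono)
  thus ?thesis using lW n1 nR2 by (simp add: left_diff_distrib)
qed



lemma abs_le_linf: assumes "j < p" shows "\<bar>d j\<bar> \<le> linf p d"
proof -
  have "\<bar>d j\<bar> \<in> insert 0 ((\<lambda>j. \<bar>d j\<bar>) ` {..<p})" using assms by auto
  thus ?thesis unfolding linf_def by (intro Max_ge) auto
qed

lemma linf_nonneg: "0 \<le> linf p d"
  unfolding linf_def by (rule Max_ge) auto

lemma linf_le_iff: "linf p d \<le> t \<longleftrightarrow> 0 \<le> t \<and> (\<forall>j<p. \<bar>d j\<bar> \<le> t)"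
  unfolding linf_def by (auto simp: Max_le_iff)

lemma sum_split_T:
  fixes g :: "nat \<Rightarrow> real"
  assumes "T \<subseteq> {..<p}"
  shows "(\<Sum>j<p. g j) = (\<Sum>j\<in>T. g j) + (\<Sum>j\<in>{..<p}-T. g j)"
  using sum.subset_diff[OF assms, of g] by simp

lemma lasso_basic:
  fixes e f :: "nat \<Rightarrow> real" and bh b0 :: "nat \<Rightarrow> real"
  assumes n1: "n \<ge> 1"
    and las: "lasso_sol n p x (\<lambda>i. f i + e i) lam bh"
    and b0: "b0 \<in> vecs p"
    and cp: "c' > 1"
    and lamS: "c' * real n * linf p (Svec n x e) \<le> lam"
  defines "cs \<equiv> sqrt (En n (\<lambda>i. (f i - xb x p i b0)\<^sup>2))"
    and "N \<equiv> norm2n n p x (\<lambda>j. bh j - b0 j)"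
    and "A \<equiv> (\<Sum>j\<in>supp p b0. \<bar>bh j - b0 j\<bar>)"
    and "B \<equiv> (\<Sum>j\<in>{..<p}-supp p b0. \<bar>bh j - b0 j\<bar>)"
  shows "N \<le> 4 * cs \<or> (N\<^sup>2 \<le> 4 * (lam / real n) * A \<and> B \<le> (c' + 1) / (c' - 1) * A)"
proof -
  define T where "T = supp p b0"
  define D where "D = (\<lambda>j. bh j - b0 j)"
  define u where "u = (\<lambda>i. xb x p i D)"
  define r where "r = (\<lambda>i. f i - xb x p i b0)"
  define L where "L = lam / real n"
  have A_def: "A = (\<Sum>j\<in>T. \<bar>bh j - b0 j\<bar>)" unfolding A_def T_def ..
  have B_def: "B = (\<Sum>j\<in>{..<p}-T. \<bar>bh j - b0 j\<bar>)" unfolding B_def T_def ..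
  have rn: "real n > 0" using n1 by simp
  have Tp: "T \<subseteq> {..<p}" unfolding T_def supp_def by auto
  have bhv: "bh \<in> vecs p" using las unfolding lasso_sol_def by simp
  have ineq: "Qhat n p x (\<lambda>i. f i + e i) bh + lam / real n * l1 p bh
      \<le> Qhat n p x (\<lambda>i. f i + e i) b0 + lam / real n * l1 p b0"
    using las b0 unfolding lasso_sol_def by blast
  have xbh: "xb x p i bh = xb x p i b0 + u i" for i
    unfolding u_def D_def using xb_add[of x p i b0 "\<lambda>j. bh j - b0 j"] by simp
  have Q1: "Qhat n p x (\<lambda>i. f i + e i) bh = (\<Sum>i<n. (r i + e i - u i)\<^sup>2) / real n"
    unfolding Qhat_def En_def r_def xbh by (simp add: algebra_simps)
  have Q0: "Qhat n p x (\<lambda>i. f i + e i) b0 = (\<Sum>i<n. (r i + e i)\<^sup>2) / real n"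
    unfolding Qhat_def En_def r_def by (simp add: algebra_simps)
  have expand: "(\<Sum>i<n. (r i + e i - u i)\<^sup>2) = (\<Sum>i<n. (r i + e i)\<^sup>2) - 2 * (\<Sum>i<n. r i * u i)
      - 2 * (\<Sum>i<n. e i * u i) + (\<Sum>i<n. (u i)\<^sup>2)"
    by (simp add: power2_eq_square algebra_simps sum.distrib sum_subtractf sum_distrib_left)
  have ineq2: "(\<Sum>i<n. (u i)\<^sup>2) \<le> 2 * (\<Sum>i<n. r i * u i) + 2 * (\<Sum>i<n. e i * u i)
      + lam * (l1 p b0 - l1 p bh)"
  proof -
    have "(\<Sum>i<n. (r i + e i - u i)\<^sup>2) / real n + lam / real n * l1 p bh
      \<le> (\<Sum>i<n. (r i + e i)\<^sup>2) / real n + lam / real n * l1 p b0"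
      using ineq unfolding Q1 Q0 .
    hence "(\<Sum>i<n. (r i + e i - u i)\<^sup>2) + lam * l1 p bh \<le> (\<Sum>i<n. (r i + e i)\<^sup>2) + lam * l1 p b0"
      using rn by (simp add: divide_simps)
    thus ?thesis unfolding expand by (simp add: algebra_simps)
  qed
  have eu: "2 * (\<Sum>i<n. e i * u i) = real n * (\<Sum>j<p. D j * Svec n x e j)"
  proof -
    have "(\<Sum>i<n. e i * u i) = (\<Sum>i<n. \<Sum>j<p. e i * (x i j * D j))"
      unfolding u_def xb_def by (simp add: sum_distrib_left)
    also have "\<dots> = (\<Sum>j<p. \<Sum>i<n. e i * (x i j * D j))" by (rule sum.swap)
    also have "\<dots> = (\<Sum>j<p. D j * (\<Sum>i<n. x i j * e i))"
      by (simp add: sum_distrib_left algebra_simps)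
    finally have 1: "(\<Sum>i<n. e i * u i) = (\<Sum>j<p. D j * (\<Sum>i<n. x i j * e i))" .
    have "real n * (\<Sum>j<p. D j * Svec n x e j) = (\<Sum>j<p. real n * (D j * Svec n x e j))"
      by (simp add: sum_distrib_left)
    also have "\<dots> = (\<Sum>j<p. 2 * (D j * (\<Sum>i<n. x i j * e i)))"
      unfolding Svec_def En_def using rn by (intro sum.cong) auto
    finally show ?thesis unfolding 1 by (simp add: sum_distrib_left)
  qed
  have l1D: "l1 p D = A + B"
    unfolding l1_def A_def B_def D_def by (rule sum_split_T[OF Tp])
  have Sbound: "(\<Sum>j<p. D j * Svec n x e j) \<le> linf p (Svec n x e) * l1 p D"
  proof -
    have "(\<Sum>j<p. D j * Svec n x e j) \<le> (\<Sum>j<p. \<bar>D j\<bar> * linf p (Svec n x e))"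
    proof (rule sum_mono)
      fix j assume "j \<in> {..<p}"
      hence "\<bar>Svec n x e j\<bar> \<le> linf p (Svec n x e)" by (simp add: abs_le_linf)
      hence "\<bar>D j\<bar> * \<bar>Svec n x e j\<bar> \<le> \<bar>D j\<bar> * linf p (Svec n x e)"
        by (rule mult_left_mono) simp
      moreover have "D j * Svec n x e j \<le> \<bar>D j\<bar> * \<bar>Svec n x e j\<bar>"
        by (metis abs_ge_self abs_mult)
      ultimately show "D j * Svec n x e j \<le> \<bar>D j\<bar> * linf p (Svec n x e)" by linarith
    qed
    also have "\<dots> = linf p (Svec n x e) * l1 p D" unfolding l1_def by (simp add: sum_distrib_left mult.commute)
    finally show ?thesis .
  qed
  have lam0: "0 \<le> lam" using lamS cp linf_nonneg[of p "Svec n x e"] rn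
    by (metis mult_nonneg_nonneg of_nat_0_le_iff order_trans less_le_not_le zero_less_one)
  have L0: "0 \<le> L" unfolding L_def using lam0 rn by simp
  have linfL: "linf p (Svec n x e) \<le> L / c'"
    unfolding L_def using lamS cp rn by (simp add: field_simps)
  have noise: "2 * (\<Sum>i<n. e i * u i) \<le> real n * (L / c') * (A + B)"
  proof -
    have "(\<Sum>j<p. D j * Svec n x e j) \<le> (L / c') * (A + B)"
      using Sbound linfL l1D
      by (metis A_def B_def abs_ge_zero add_nonneg_nonneg l1D mult_right_mono order_trans sum_nonneg)
    hence "real n * (\<Sum>j<p. D j * Svec n x e j) \<le> real n * ((L / c') * (A + B))"
      by (rule mult_left_mono) simp
    thus ?thesis unfolding eu by (simp only: mult.assoc)
  qed
  have L2r: "L2_set r {..<n} = sqrt (real n) * cs"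
    unfolding L2_set_def cs_def En_def r_def using rn by (simp add: real_sqrt_divide)
  have L2u: "L2_set u {..<n} = sqrt (real n) * N"
    unfolding N_def norm2n_alt u_def D_def using rn by simp
  have ru: "(\<Sum>i<n. r i * u i) \<le> real n * cs * N"
  proof -
    have "(\<Sum>i<n. r i * u i) \<le> (\<Sum>i<n. \<bar>r i\<bar> * \<bar>u i\<bar>)"
      by (rule sum_mono) (metis abs_ge_self abs_mult)
    also have "\<dots> \<le> L2_set r {..<n} * L2_set u {..<n}" by (rule L2_set_mult_ineq)
    also have "\<dots> = real n * cs * N" unfolding L2r L2u using rn
      by (simp add: algebra_simps)
    finally show ?thesis .
  qed
  have uN: "(\<Sum>i<n. (u i)\<^sup>2) = real n * N\<^sup>2"
    unfolding N_def norm2n_sq En_def u_def D_def using rn by simp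
  have l1diff: "l1 p b0 - l1 p bh \<le> A - B"
  proof -
    have b0T: "\<And>j. j \<in> {..<p} - T \<Longrightarrow> b0 j = 0" unfolding T_def supp_def by auto
    have "l1 p b0 - l1 p bh = (\<Sum>j\<in>T. \<bar>b0 j\<bar> - \<bar>bh j\<bar>) + (\<Sum>j\<in>{..<p}-T. \<bar>b0 j\<bar> - \<bar>bh j\<bar>)"
      unfolding l1_def sum_subtractf[symmetric] by (rule sum_split_T[OF Tp])
    also have "(\<Sum>j\<in>T. \<bar>b0 j\<bar> - \<bar>bh j\<bar>) \<le> A"
      unfolding A_def by (rule sum_mono) linarith
    also have "(\<Sum>j\<in>{..<p}-T. \<bar>b0 j\<bar> - \<bar>bh j\<bar>) = - B"
      unfolding B_def by (simp add: b0T sum_negf[symmetric])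
    finally show ?thesis by simp
  qed
  have main: "real n * N\<^sup>2 \<le> 2 * (real n * cs * N) + real n * (L / c') * (A + B) + lam * (A - B)"
    using ineq2 noise ru l1diff lam0 unfolding uN
    by (smt (verit) mult_left_mono)
  have lamL: "lam = real n * L" unfolding L_def using rn by simp
  have main2: "N\<^sup>2 \<le> 2 * cs * N + L * ((1 + 1 / c') * A - (1 - 1 / c') * B)"
  proof -
    have "real n * N\<^sup>2 \<le> real n * (2 * cs * N + L * ((1 + 1 / c') * A - (1 - 1 / c') * B))"
      using main unfolding lamL by (simp add: algebra_simps add_divide_distrib)
    thus ?thesis using rn by simp
  qed
  have cs0: "0 \<le> cs" unfolding cs_def using En_nonneg[of n "\<lambda>i. (f i - xb x p i b0)\<^sup>2"] by simp
  have N0: "0 \<le> N" unfolding N_def by (rule norm2n_nonneg)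
  have A0: "0 \<le> A" unfolding A_def by (simp add: sum_nonneg)
  have B0: "0 \<le> B" unfolding B_def by (simp add: sum_nonneg)
  show ?thesis
  proof (cases "N \<le> 4 * cs")
    case True thus ?thesis by simp
  next
    case False
    have "2 * cs * N \<le> N\<^sup>2 / 2" using False cs0 N0
      by (simp add: power2_eq_square)
    hence half: "N\<^sup>2 / 2 \<le> L * ((1 + 1 / c') * A - (1 - 1 / c') * B)" using main2 by linarith
    have ic: "0 < 1 / c'" "1 / c' < 1" using cp by auto
    have Npos: "0 < N\<^sup>2" using False cs0 by simp
    have Lpos: "0 < L"
    proof (rule ccontr)
      assume "\<not> 0 < L" hence "L = 0" using L0 by simp
      thus False using half Npos by simp
    qed
    have "0 \<le> L * ((1 + 1 / c') * A - (1 - 1 / c') * B)" using half Npos by linarith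
    hence "L * ((1 - 1 / c') * B) \<le> L * ((1 + 1 / c') * A)"
      by (simp add: right_diff_distrib)
    hence h: "(1 - 1 / c') * B \<le> (1 + 1 / c') * A" using Lpos by simp
    have e1: "c' * ((1 - 1 / c') * B) = (c' - 1) * B" using cp by (simp add: field_simps)
    have e2: "c' * ((1 + 1 / c') * A) = (c' + 1) * A" using cp by (simp add: field_simps)
    have "(c' - 1) * B \<le> (c' + 1) * A"
      using mult_left_mono[OF h, of c'] cp unfolding e1 e2 by simp
    moreover have "0 < c' - 1" using cp by simp
    ultimately have cone: "B \<le> (c' + 1) / (c' - 1) * A"
      by (simp add: field_simps)
    have "L * ((1 + 1 / c') * A - (1 - 1 / c') * B) \<le> L * (2 * A)"
    proof (rule mult_left_mono[OF _ L0])
      have "0 \<le> (1 - 1 / c') * B" using ic B0 by simp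
      moreover have "(1 / c') * A \<le> 1 * A" using ic A0 by (intro mult_right_mono) auto
      ultimately show "(1 + 1 / c') * A - (1 - 1 / c') * B \<le> 2 * A" by (simp add: algebra_simps)
    qed
    hence "N\<^sup>2 \<le> 4 * L * A" using half by linarith
    thus ?thesis using cone unfolding L_def by simp
  qed
qed



abbreviation "Nstd \<equiv> density lborel (\<lambda>u. ennreal (std_normal_density u))"

lemma prob_Nstd: "prob_space Nstd"
  by (rule prob_space_normal_density) simp

lemma space_Nstd[simp]: "space Nstd = UNIV" by simp

lemma sets_Nstd[simp]: "sets Nstd = sets borel" by simp

lemma shift_identity:
  "std_normal_density x * exp (u * x - u\<^sup>2) = exp (- u\<^sup>2 / 2) * normal_density u 1 x"
proof -
  have "exp (- x\<^sup>2 / 2) * exp (u * x - u\<^sup>2) = exp (- u\<^sup>2 / 2) * exp (- (x - u)\<^sup>2 / 2)"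
    unfolding exp_add[symmetric] by (simp add: power2_eq_square algebra_simps)
  thus ?thesis unfolding normal_density_def by simp
qed

lemma nn_integral_normal_density_1: "(\<integral>\<^sup>+x. ennreal (normal_density \<mu> 1 x) \<partial>lborel) = 1"
proof -
  interpret prob_space "density lborel (normal_density \<mu> 1)" by (rule prob_space_normal_density) simp
  have "emeasure (density lborel (normal_density \<mu> 1)) UNIV = 1" using emeasure_space_1 by simp
  thus ?thesis by (subst (asm) emeasure_density) auto
qed

lemma chernoff_Nstd:
  assumes S: "S \<in> sets borel" and uS: "\<And>x. x \<in> S \<Longrightarrow> u\<^sup>2 \<le> u * x"
  shows "measure Nstd S \<le> exp (- u\<^sup>2 / 2)"
proof -
  have "emeasure Nstd S = (\<integral>\<^sup>+x. ennreal (std_normal_density x) * indicator S x \<partial>lborel)"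
    by (rule emeasure_density) (use S in auto)
  also have "\<dots> \<le> (\<integral>\<^sup>+x. ennreal (exp (- u\<^sup>2 / 2)) * ennreal (normal_density u 1 x) \<partial>lborel)"
  proof (rule nn_integral_mono)
    fix x
    have "std_normal_density x * indicator S x \<le> std_normal_density x * exp (u * x - u\<^sup>2)"
    proof (cases "x \<in> S")
      case True
      hence "0 \<le> u * x - u\<^sup>2" using uS by simp
      hence "1 \<le> exp (u * x - u\<^sup>2)" by simp
      hence "std_normal_density x * 1 \<le> std_normal_density x * exp (u * x - u\<^sup>2)"
        by (rule mult_left_mono) simp
      thus ?thesis using True by simp
    next
      case False thus ?thesis by simp
    qed
    also have "\<dots> = exp (- u\<^sup>2 / 2) * normal_density u 1 x" by (rule shift_identity)
    finally have "std_normal_density x * indicator S x \<le> exp (- u\<^sup>2 / 2) * normal_density u 1 x" .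
    hence "ennreal (std_normal_density x * indicator S x) \<le> ennreal (exp (- u\<^sup>2 / 2) * normal_density u 1 x)"
      by (rule ennreal_leI)
    thus "ennreal (std_normal_density x) * indicator S x \<le> ennreal (exp (- u\<^sup>2 / 2)) * ennreal (normal_density u 1 x)"
      by (cases "x \<in> S") (auto simp: ennreal_mult[symmetric])
  qed
  also have "\<dots> = ennreal (exp (- u\<^sup>2 / 2)) * (\<integral>\<^sup>+x. ennreal (normal_density u 1 x) \<partial>lborel)"
    by (rule nn_integral_cmult) auto
  also have "\<dots> = ennreal (exp (- u\<^sup>2 / 2))" by (simp add: nn_integral_normal_density_1)
  finally have "emeasure Nstd S \<le> ennreal (exp (- u\<^sup>2 / 2))" .
  moreover have "emeasure Nstd S = ennreal (measure Nstd S)"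
    using finite_measure.emeasure_eq_measure[OF prob_space.finite_measure[OF prob_Nstd]] .
  ultimately show ?thesis by simp
qed

lemma Phi_alt: "Phi t = measure Nstd {..t}" unfolding Phi_def ..

lemma Phi_upper_tail: assumes "0 \<le> t" shows "1 - Phi t \<le> exp (- t\<^sup>2 / 2)"
proof -
  have "1 - Phi t = measure Nstd (space Nstd - {..t})"
    unfolding Phi_alt using prob_space.prob_compl[OF prob_Nstd, of "{..t}"] by simp
  also have "space Nstd - {..t} = {t<..}" by auto
  also have "measure Nstd {t<..} \<le> exp (- t\<^sup>2 / 2)"
    by (rule chernoff_Nstd) (use assms in \<open>auto simp: power2_eq_square intro: mult_left_mono\<close>)
  finally show ?thesis .
qed

lemma Phi_lower_tail: assumes "t \<le> 0" shows "Phi t \<le> exp (- t\<^sup>2 / 2)"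
  unfolding Phi_alt
proof (rule chernoff_Nstd)
  fix x :: real assume "x \<in> {..t}"
  hence "x \<le> t" by simp
  hence "t * t \<le> t * x" using assms by (intro mult_left_mono_neg) auto
  thus "t\<^sup>2 \<le> t * x" by (simp add: power2_eq_square)
qed simp

lemma Phi_mono: assumes "s \<le> t" shows "Phi s \<le> Phi t"
proof -
  interpret prob_space Nstd by (rule prob_Nstd)
  show ?thesis unfolding Phi_alt by (rule finite_measure_mono) (use assms in auto)
qed



lemma quantile_attained:
  fixes V :: "'a \<Rightarrow> real"
  assumes fm: "finite_measure M" and meas: "\<And>t. {\<omega>\<in>space M. V \<omega> \<le> t} \<in> sets M"
    and ne: "tt \<in> {t. q \<le> measure M {\<omega>\<in>space M. V \<omega> \<le> t}}"
    and bb: "bdd_below {t. q \<le> measure M {\<omega>\<in>space M. V \<omega> \<le> t}}"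
  shows "q \<le> measure M {\<omega>\<in>space M. V \<omega> \<le> Inf {t. q \<le> measure M {\<omega>\<in>space M. V \<omega> \<le> t}}}"
proof -
  interpret finite_measure M by (rule fm)
  define S where "S = {t. q \<le> measure M {\<omega>\<in>space M. V \<omega> \<le> t}}"
  define a where "a = Inf S"
  define A where "A = (\<lambda>k::nat. {\<omega>\<in>space M. V \<omega> \<le> a + 1 / real (Suc k)})"
  have Sne: "S \<noteq> {}" using ne unfolding S_def by blast
  have bbS: "bdd_below S" using bb unfolding S_def .
  have Ak: "q \<le> measure M (A k)" for k
  proof -
    have "Inf S < a + 1 / real (Suc k)" unfolding a_def by simp
    then obtain t where t: "t \<in> S" "t < a + 1 / real (Suc k)"
      using cInf_less_iff[OF Sne bbS] by blast
    have "measure M {\<omega>\<in>space M. V \<omega> \<le> t} \<le> measure M (A k)"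
      unfolding A_def by (rule finite_measure_mono) (use t(2) meas in auto)
    thus ?thesis using t(1) unfolding S_def by simp
  qed
  have rA: "range A \<subseteq> sets M" unfolding A_def using meas by auto
  have dA: "antimono_on UNIV A"
  proof (rule antimonoI, unfold A_def, rule subsetI)
    fix k l :: nat and \<omega> assume kl: "k \<le> l" and w: "\<omega> \<in> {\<omega> \<in> space M. V \<omega> \<le> a + 1 / real (Suc l)}"
    have "1 / real (Suc l) \<le> 1 / real (Suc k)" using kl by (simp add: frac_le)
    thus "\<omega> \<in> {\<omega> \<in> space M. V \<omega> \<le> a + 1 / real (Suc k)}" using w by auto
  qed
  have lim: "(\<lambda>k. measure M (A k)) \<longlonglongrightarrow> measure M (\<Inter>(range A))"
    by (rule finite_Lim_measure_decseq[OF rA dA])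
  have inter: "\<Inter>(range A) = {\<omega>\<in>space M. V \<omega> \<le> a}"
  proof
    show "{\<omega>\<in>space M. V \<omega> \<le> a} \<subseteq> \<Inter>(range A)"
      unfolding A_def by auto (smt (verit) of_nat_0_le_iff divide_nonneg_nonneg)
    show "\<Inter>(range A) \<subseteq> {\<omega>\<in>space M. V \<omega> \<le> a}"
    proof
      fix \<omega> assume w: "\<omega> \<in> \<Inter>(range A)"
      hence sp: "\<omega> \<in> space M" unfolding A_def by auto
      have "V \<omega> \<le> a"
      proof (rule ccontr)
        assume "\<not> V \<omega> \<le> a"
        hence "0 < V \<omega> - a" by simp
        then obtain k where k: "inverse (real (Suc k)) < V \<omega> - a"
          using reals_Archimedean by blast
        have "\<omega> \<in> A k" using w by auto
        hence "V \<omega> \<le> a + 1 / real (Suc k)" unfolding A_def by auto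
        thus False using k by (simp add: inverse_eq_divide)
      qed
      thus "\<omega> \<in> {\<omega>\<in>space M. V \<omega> \<le> a}" using sp by simp
    qed
  qed
  have "q \<le> measure M (\<Inter>(range A))"
    by (rule LIMSEQ_le_const[OF lim]) (use Ak in auto)
  thus ?thesis unfolding inter a_def S_def .
qed

lemma Phi_as_quantile: "Phi t = measure Nstd {\<omega>\<in>space Nstd. (\<lambda>x. x) \<omega> \<le> t}"
  unfolding Phi_alt by (simp add: atMost_def)

lemma Phi_le_1: "Phi t \<le> 1"
  unfolding Phi_alt using prob_space.prob_le_1[OF prob_Nstd] .

lemma Phi_inv_bdd:
  assumes q: "0 < q" "q \<le> 1"
  shows "bdd_below {t. q \<le> Phi t}"
proof (rule bdd_belowI[of _ "- sqrt (2 * ln (1 / q))"])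
  fix t assume "t \<in> {t. q \<le> Phi t}"
  hence qt: "q \<le> Phi t" by simp
  have l0: "0 \<le> ln (1 / q)" using q by simp
  show "- sqrt (2 * ln (1 / q)) \<le> t"
  proof (cases "0 \<le> t")
    case True thus ?thesis using l0 by (smt (verit) real_sqrt_ge_zero mult_nonneg_nonneg)
  next
    case False
    hence "q \<le> exp (- t\<^sup>2 / 2)" using qt Phi_lower_tail[of t] by simp
    hence "ln q \<le> - t\<^sup>2 / 2" using q by (metis ln_exp ln_le_cancel_iff exp_gt_zero)
    hence "t\<^sup>2 \<le> 2 * ln (1 / q)" using q by (simp add: ln_div)
    hence "sqrt (t\<^sup>2) \<le> sqrt (2 * ln (1 / q))" by (rule real_sqrt_le_mono)
    thus ?thesis using False by simp
  qed
qed

lemma Phi_Phi_inv: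
  assumes q: "0 < q" "q \<le> 1" and ne: "q \<le> Phi t0"
  shows "q \<le> Phi (Phi_inv q)"
proof -
  have e: "\<And>t. measure Nstd {\<omega>\<in>space Nstd. (\<lambda>x. x) \<omega> \<le> t} = Phi t"
    by (rule Phi_as_quantile[symmetric])
  have "q \<le> measure Nstd {\<omega>\<in>space Nstd. (\<lambda>x. x) \<omega> \<le> Inf {t. q \<le> measure Nstd {\<omega>\<in>space Nstd. (\<lambda>x. x) \<omega> \<le> t}}}"
  proof (rule quantile_attained[OF prob_space.finite_measure[OF prob_Nstd], where tt=t0])
    show "\<And>t. {\<omega> \<in> space Nstd. \<omega> \<le> t} \<in> sets Nstd" by (simp add: atMost_def[symmetric])
    show "t0 \<in> {t. q \<le> measure Nstd {\<omega> \<in> space Nstd. \<omega> \<le> t}}" unfolding e using ne by simp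
    show "bdd_below {t. q \<le> measure Nstd {\<omega> \<in> space Nstd. \<omega> \<le> t}}" unfolding e by (rule Phi_inv_bdd[OF q])
  qed
  thus ?thesis unfolding Phi_inv_def e .
qed

lemma Phi_inv_le:
  assumes q: "0 < q" "q \<le> 1" and t0: "0 \<le> t0" "exp (- t0\<^sup>2 / 2) \<le> 1 - q"
  shows "Phi_inv q \<le> t0"
proof -
  have "q \<le> Phi t0" using Phi_upper_tail[OF t0(1)] t0(2) by simp
  thus ?thesis unfolding Phi_inv_def by (intro cInf_lower Phi_inv_bdd q) auto
qed



lemma gauss_sum:
  fixes n :: nat and a :: "nat \<Rightarrow> real"
  assumes P: "prob_space M" and s0: "0 < \<sigma>"
    and ind: "prob_space.indep_vars M (\<lambda>_. borel) \<epsilon> {..<n}"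
    and nrm: "\<And>i. i < n \<Longrightarrow> distributed M lborel (\<epsilon> i) (\<lambda>t. ennreal (normal_density 0 \<sigma> t))"
    and av: "(\<Sum>i<n. (a i)\<^sup>2) = v" and v0: "0 < v"
  shows "distributed M lborel (\<lambda>\<omega>. \<Sum>i<n. a i * \<epsilon> i \<omega>) (\<lambda>t. ennreal (normal_density 0 (\<sigma> * sqrt v) t))"
proof -
  interpret prob_space M by (rule P)
  define I where "I = {i. i < n \<and> a i \<noteq> 0}"
  have fI: "finite I" unfolding I_def by simp
  have In: "I \<subseteq> {..<n}" unfolding I_def by auto
  have sumI: "\<And>g. (\<Sum>i<n. a i * g i) = (\<Sum>i\<in>I. a i * g i)"
    by (rule sum.mono_neutral_right) (auto simp: I_def)
  have sumI2: "(\<Sum>i<n. (a i)\<^sup>2) = (\<Sum>i\<in>I. (a i)\<^sup>2)"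
    by (rule sum.mono_neutral_right) (auto simp: I_def)
  have Ine: "I \<noteq> {}"
  proof
    assume "I = {}" hence "(\<Sum>i<n. (a i)\<^sup>2) = 0" using sumI2 by simp
    thus False using av v0 by simp
  qed
  have ind2: "indep_vars (\<lambda>_. borel) (\<lambda>i \<omega>. a i * \<epsilon> i \<omega>) I"
    using indep_vars_compose2[OF indep_vars_subset[OF ind In], where Y="\<lambda>i t. a i * t" and N="\<lambda>_. borel"]
    by simp
  have nd: "distributed M lborel (\<lambda>\<omega>. a i * \<epsilon> i \<omega>) (normal_density 0 (\<bar>a i\<bar> * \<sigma>))" if "i \<in> I" for i
  proof -
    have "i < n" "a i \<noteq> 0" using that unfolding I_def by auto
    from normal_density_affine[OF nrm[OF \<open>i < n\<close>] s0 \<open>a i \<noteq> 0\<close>, of 0]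
    show ?thesis by simp
  qed
  have "distributed M lborel (\<lambda>\<omega>. \<Sum>i\<in>I. a i * \<epsilon> i \<omega>)
      (normal_density (\<Sum>i\<in>I. 0) (sqrt (\<Sum>i\<in>I. (\<bar>a i\<bar> * \<sigma>)\<^sup>2)))"
    by (rule sum_indep_normal[OF fI Ine ind2]) (use s0 nd in \<open>auto simp: I_def\<close>)
  moreover have "(\<Sum>i\<in>I. (\<bar>a i\<bar> * \<sigma>)\<^sup>2) = \<sigma>\<^sup>2 * v"
    unfolding av[symmetric] sumI2 by (simp add: power_mult_distrib sum_distrib_left mult.commute)
  moreover have "sqrt (\<sigma>\<^sup>2 * v) = \<sigma> * sqrt v" using s0 by (simp add: real_sqrt_mult)
  ultimately show ?thesis using sumI by simp
qed

lemma gauss_tail: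
  fixes n :: nat and a :: "nat \<Rightarrow> real"
  assumes P: "prob_space M" and s0: "0 < \<sigma>"
    and ind: "prob_space.indep_vars M (\<lambda>_. borel) \<epsilon> {..<n}"
    and nrm: "\<And>i. i < n \<Longrightarrow> distributed M lborel (\<epsilon> i) (\<lambda>t. ennreal (normal_density 0 \<sigma> t))"
    and av: "(\<Sum>i<n. (a i)\<^sup>2) = v" and v0: "0 < v"
  shows "measure M {\<omega>\<in>space M. \<sigma> * sqrt v * u < (\<Sum>i<n. a i * \<epsilon> i \<omega>)} = 1 - Phi u"
proof -
  interpret prob_space M by (rule P)
  define Z where "Z = (\<lambda>\<omega>. \<Sum>i<n. a i * \<epsilon> i \<omega>)"
  have sv: "0 < \<sigma> * sqrt v" using s0 v0 by simp
  have "distributed M lborel Z (\<lambda>t. ennreal (normal_density 0 (\<sigma> * sqrt v) t))"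
    unfolding Z_def by (rule gauss_sum[OF P s0 ind nrm av v0])
  hence W: "distributed M lborel (\<lambda>\<omega>. (Z \<omega> - 0) / (\<sigma> * sqrt v)) std_normal_density"
    using normal_standard_normal_convert[OF sv] by simp
  have eq: "{\<omega>\<in>space M. \<sigma> * sqrt v * u < Z \<omega>} = (\<lambda>\<omega>. (Z \<omega> - 0) / (\<sigma> * sqrt v)) -` {u<..} \<inter> space M"
    using sv by (auto simp: field_simps)
  have "emeasure M {\<omega>\<in>space M. \<sigma> * sqrt v * u < Z \<omega>}
      = (\<integral>\<^sup>+x. ennreal (std_normal_density x) * indicator {u<..} x \<partial>lborel)"
    unfolding eq by (rule distributed_emeasure[OF W]) simp
  also have "\<dots> = emeasure Nstd {u<..}" by (rule emeasure_density[symmetric]) auto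
  finally have "measure M {\<omega>\<in>space M. \<sigma> * sqrt v * u < Z \<omega>} = measure Nstd {u<..}"
    by (simp add: measure_def)
  also have "\<dots> = measure Nstd (space Nstd - {..u})" by (simp add: Compl_eq_Diff_UNIV[symmetric] Compl_atMost)
  also have "\<dots> = 1 - Phi u" unfolding Phi_alt by (rule prob_space.prob_compl[OF prob_Nstd]) simp
  finally show ?thesis unfolding Z_def .
qed



lemma max_tail:
  fixes n p :: nat and x :: "nat \<Rightarrow> nat \<Rightarrow> real" and \<epsilon> :: "nat \<Rightarrow> 'a \<Rightarrow> real"
  assumes P: "prob_space M" and s0: "0 < \<sigma>"
    and ind: "prob_space.indep_vars M (\<lambda>_. borel) \<epsilon> {..<n}"
    and nrm: "\<And>i. i < n \<Longrightarrow> distributed M lborel (\<epsilon> i) (\<lambda>t. ennreal (normal_density 0 \<sigma> t))"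
    and n1: "n \<ge> 1"
    and col: "\<And>j. j < p \<Longrightarrow> (\<Sum>i<n. (x i j)\<^sup>2) = real n"
  shows "{\<omega>\<in>space M. \<forall>j<p. \<bar>\<Sum>i<n. x i j * \<epsilon> i \<omega>\<bar> \<le> \<sigma> * sqrt (real n) * u} \<in> sets M"
    and "1 - 2 * real p * (1 - Phi u) \<le>
         measure M {\<omega>\<in>space M. \<forall>j<p. \<bar>\<Sum>i<n. x i j * \<epsilon> i \<omega>\<bar> \<le> \<sigma> * sqrt (real n) * u}"
proof -
  interpret prob_space M by (rule P)
  define Z where "Z = (\<lambda>j \<omega>. \<Sum>i<n. x i j * \<epsilon> i \<omega>)"
  define c where "c = \<sigma> * sqrt (real n) * u"
  have em: "\<epsilon> i \<in> borel_measurable M" if "i < n" for i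
    using distributed_measurable[OF nrm[OF that]] by (simp add: measurable_lborel2)
  have Zm: "Z j \<in> borel_measurable M" for j
    unfolding Z_def by (rule borel_measurable_sum) (use em in auto)
  define Up where "Up = (\<lambda>j. {\<omega>\<in>space M. c < Z j \<omega>})"
  define Dn where "Dn = (\<lambda>j. {\<omega>\<in>space M. c < - Z j \<omega>})"
  have Upm: "Up j \<in> sets M" for j unfolding Up_def using Zm[of j] by measurable
  have Dnm: "Dn j \<in> sets M" for j unfolding Dn_def using Zm[of j] by measurable
  define Good where "Good = {\<omega>\<in>space M. \<forall>j<p. \<bar>Z j \<omega>\<bar> \<le> c}"
  have Geq: "Good = space M - (\<Union>j\<in>{..<p}. Up j \<union> Dn j)"
    unfolding Good_def Up_def Dn_def by (auto simp: abs_le_iff not_less)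
  have Bm: "(\<Union>j\<in>{..<p}. Up j \<union> Dn j) \<in> sets M" using Upm Dnm by auto
  show Gm: "{\<omega>\<in>space M. \<forall>j<p. \<bar>\<Sum>i<n. x i j * \<epsilon> i \<omega>\<bar> \<le> \<sigma> * sqrt (real n) * u} \<in> sets M"
    using Geq Bm unfolding Good_def Z_def c_def by auto
  have sn: "\<sigma> * sqrt (real n) * u = \<sigma> * sqrt (real n) * u" ..
  have mUp: "measure M (Up j) = 1 - Phi u" if "j < p" for j
    unfolding Up_def Z_def c_def
    by (rule gauss_tail[OF P s0 ind nrm col[OF that]]) (use n1 in auto)
  have mDn: "measure M (Dn j) = 1 - Phi u" if "j < p" for j
  proof -
    have "Dn j = {\<omega>\<in>space M. \<sigma> * sqrt (real n) * u < (\<Sum>i<n. (- x i j) * \<epsilon> i \<omega>)}"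
      unfolding Dn_def Z_def c_def by (simp add: sum_negf)
    also have "measure M \<dots> = 1 - Phi u"
      by (rule gauss_tail[OF P s0 ind nrm]) (use col[OF that] n1 in auto)
    finally show ?thesis .
  qed
  have "measure M (\<Union>j\<in>{..<p}. Up j \<union> Dn j) \<le> (\<Sum>j\<in>{..<p}. measure M (Up j \<union> Dn j))"
    by (rule finite_measure_subadditive_finite) (use Upm Dnm in auto)
  also have "\<dots> \<le> (\<Sum>j\<in>{..<p}. 2 * (1 - Phi u))"
  proof (rule sum_mono)
    fix j assume "j \<in> {..<p}"
    hence "j < p" by simp
    have "measure M (Up j \<union> Dn j) \<le> measure M (Up j) + measure M (Dn j)"
      by (rule measure_Un_le[OF Upm Dnm])
    thus "measure M (Up j \<union> Dn j) \<le> 2 * (1 - Phi u)" using mUp[OF \<open>j<p\<close>] mDn[OF \<open>j<p\<close>] by simp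
  qed
  finally have bad: "measure M (\<Union>j\<in>{..<p}. Up j \<union> Dn j) \<le> 2 * real p * (1 - Phi u)" by (simp add: algebra_simps)
  have "measure M Good = 1 - measure M (\<Union>j\<in>{..<p}. Up j \<union> Dn j)"
    unfolding Geq by (rule prob_compl[OF Bm])
  with bad have "1 - 2 * real p * (1 - Phi u) \<le> measure M Good" by simp
  thus "1 - 2 * real p * (1 - Phi u) \<le>
         measure M {\<omega>\<in>space M. \<forall>j<p. \<bar>\<Sum>i<n. x i j * \<epsilon> i \<omega>\<bar> \<le> \<sigma> * sqrt (real n) * u}"
    unfolding Good_def Z_def c_def .
qed



lemma t0_facts:
  fixes p :: nat
  assumes a: "0 < \<alpha>" "\<alpha> < 1" and p2: "p \<ge> 2" and lnC: "ln (1 / \<alpha>) \<le> C * ln (real p)"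
  defines "t0 \<equiv> sqrt (2 * ln (2 * real p / \<alpha>))"
  shows "0 \<le> t0" "exp (- t0\<^sup>2 / 2) = \<alpha> / (2 * real p)"
    "t0 \<le> sqrt (2 * (2 + \<bar>C\<bar>)) * sqrt (ln (real p))"
proof -
  have pp: "0 < real p" using p2 by simp
  have gt1: "1 < 2 * real p / \<alpha>" using a p2 by (simp add: field_simps)
  have l0: "0 \<le> ln (2 * real p / \<alpha>)" by (rule ln_ge_zero) (use gt1 in linarith)
  show "0 \<le> t0" unfolding t0_def using l0 by simp
  have "t0\<^sup>2 = 2 * ln (2 * real p / \<alpha>)" unfolding t0_def using l0 by simp
  hence "- t0\<^sup>2 / 2 = ln (\<alpha> / (2 * real p))" using a pp by (simp add: ln_div)
  thus "exp (- t0\<^sup>2 / 2) = \<alpha> / (2 * real p)" using a pp by simp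
  have lp: "ln 2 \<le> ln (real p)" using p2 by simp
  have lp0: "0 \<le> ln (real p)" using p2 by simp
  have "ln (2 * real p / \<alpha>) = ln 2 + ln (real p) + ln (1 / \<alpha>)"
    using a pp by (simp add: ln_div ln_mult)
  also have "\<dots> \<le> ln (real p) + ln (real p) + \<bar>C\<bar> * ln (real p)"
    using lp lnC lp0 by (smt (verit) abs_ge_self mult_right_mono)
  finally have "2 * ln (2 * real p / \<alpha>) \<le> 2 * (2 + \<bar>C\<bar>) * ln (real p)" by (simp add: algebra_simps)
  hence "t0 \<le> sqrt (2 * (2 + \<bar>C\<bar>) * ln (real p))" unfolding t0_def by (rule real_sqrt_le_mono)
  thus "t0 \<le> sqrt (2 * (2 + \<bar>C\<bar>)) * sqrt (ln (real p))" by (simp add: real_sqrt_mult)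
qed

lemma n_Svec: "n \<ge> 1 \<Longrightarrow> real n * Svec n x e j = 2 * (\<Sum>i<n. x i j * e i)"
  unfolding Svec_def En_def by simp

lemma linf_from_Z:
  assumes n1: "n \<ge> 1" and t0: "0 \<le> t" and Z: "\<forall>j<p. \<bar>\<Sum>i<n. x i j * e i\<bar> \<le> t"
  shows "real n * linf p (Svec n x e) \<le> 2 * t"
proof -
  have rn: "0 < real n" using n1 by simp
  have "linf p (Svec n x e) \<le> 2 * t / real n"
    unfolding linf_le_iff
  proof (intro conjI allI impI)
    show "0 \<le> 2 * t / real n" using t0 rn by simp
    fix j assume "j < p"
    have "\<bar>real n * Svec n x e j\<bar> \<le> 2 * t" unfolding n_Svec[OF n1] using Z \<open>j<p\<close> by (simp add: abs_mult)
    thus "\<bar>Svec n x e j\<bar> \<le> 2 * t / real n" using rn by (simp add: abs_mult field_simps)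
  qed
  thus ?thesis using rn by (simp add: field_simps)
qed

lemma V_char:
  assumes n1: "n \<ge> 1" and s0: "0 < \<sigma>"
  shows "(real n * linf p (\<lambda>j. Svec n x e j / (2 * \<sigma>)) \<le> t) \<longleftrightarrow>
         (0 \<le> t \<and> (\<forall>j<p. \<bar>\<Sum>i<n. x i j * e i\<bar> \<le> \<sigma> * sqrt (real n) * (t / sqrt (real n))))"
proof -
  have rn: "0 < real n" using n1 by simp
  have sq: "sqrt (real n) * (t / sqrt (real n)) = t" using rn by simp
  have "(real n * linf p (\<lambda>j. Svec n x e j / (2 * \<sigma>)) \<le> t) \<longleftrightarrow>
        linf p (\<lambda>j. Svec n x e j / (2 * \<sigma>)) \<le> t / real n"
    using rn by (simp add: field_simps)
  also have "\<dots> \<longleftrightarrow> 0 \<le> t / real n \<and> (\<forall>j<p. \<bar>Svec n x e j / (2 * \<sigma>)\<bar> \<le> t / real n)"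
    by (rule linf_le_iff)
  also have "\<dots> \<longleftrightarrow> 0 \<le> t \<and> (\<forall>j<p. \<bar>\<Sum>i<n. x i j * e i\<bar> \<le> \<sigma> * t)"
  proof -
    have "\<bar>Svec n x e j / (2 * \<sigma>)\<bar> \<le> t / real n \<longleftrightarrow> \<bar>\<Sum>i<n. x i j * e i\<bar> \<le> \<sigma> * t" for j
    proof -
      have ns: "0 < real n * \<sigma>" using rn s0 by simp
      have "\<bar>Svec n x e j / (2 * \<sigma>)\<bar> = \<bar>\<Sum>i<n. x i j * e i\<bar> / (real n * \<sigma>)"
        unfolding Svec_def En_def using s0 by (simp add: abs_div abs_mult)
      also have "\<dots> \<le> t / real n \<longleftrightarrow> \<bar>\<Sum>i<n. x i j * e i\<bar> \<le> t / real n * (real n * \<sigma>)"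
        by (rule pos_divide_le_eq[OF ns])
      also have "t / real n * (real n * \<sigma>) = \<sigma> * t" using rn by simp
      finally show ?thesis .
    qed
    thus ?thesis using rn by (simp add: zero_le_divide_iff)
  qed
  finally show ?thesis unfolding mult.assoc sq .
qed



lemma opt1_n:
  fixes n p :: nat and x :: "nat \<Rightarrow> nat \<Rightarrow> real" and \<epsilon> :: "nat \<Rightarrow> 'a \<Rightarrow> real"
  assumes P: "prob_space M" and s0: "0 < \<sigma>"
    and ind: "prob_space.indep_vars M (\<lambda>_. borel) \<epsilon> {..<n}"
    and nrmA: "\<forall>i<n. distributed M lborel (\<epsilon> i) (\<lambda>t. ennreal (normal_density 0 \<sigma> t))"
    and n1: "n \<ge> 1"
    and colA: "\<forall>j<p. (\<Sum>i<n. (x i j)\<^sup>2) = real n"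
    and p2: "p \<ge> 2" and a: "0 < \<alpha>" "\<alpha> < 1" and lnC: "ln (1 / \<alpha>) \<le> C * ln (real p)"
    and c0: "0 < c"
  shows "\<exists>A\<in>sets M. 1 - \<alpha> \<le> measure M A \<and> (\<forall>\<omega>\<in>A.
     c * real n * linf p (Svec n x (\<lambda>i. \<epsilon> i \<omega>)) \<le> 2 * c * \<sigma> * sqrt (real n) * Phi_inv (1 - \<alpha> / (2 * real p)) \<and>
     2 * c * \<sigma> * sqrt (real n) * Phi_inv (1 - \<alpha> / (2 * real p)) \<le> 2 * c * sqrt (2 * (2 + \<bar>C\<bar>)) * (\<sigma> * sqrt (real n * ln (real p))))"
proof -
  have nrm: "\<And>i. i < n \<Longrightarrow> distributed M lborel (\<epsilon> i) (\<lambda>t. ennreal (normal_density 0 \<sigma> t))"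
    using nrmA by blast
  have col: "\<And>j. j < p \<Longrightarrow> (\<Sum>i<n. (x i j)\<^sup>2) = real n" using colA by blast
  define q where "q = 1 - \<alpha> / (2 * real p)"
  define t0 where "t0 = sqrt (2 * ln (2 * real p / \<alpha>))"
  note tf = t0_facts[OF a p2 lnC, folded t0_def]
  have pp: "0 < real p" using p2 by simp
  have q1: "1 - q = \<alpha> / (2 * real p)" unfolding q_def by simp
  have qpos: "0 < q" "q \<le> 1" unfolding q_def using a p2 pp by (auto simp: field_simps)
  have "q \<le> Phi t0" using Phi_upper_tail[OF tf(1)] tf(2) q1 by linarith
  define u where "u = Phi_inv q"
  have Phiu: "q \<le> Phi u" unfolding u_def by (rule Phi_Phi_inv[OF qpos \<open>q \<le> Phi t0\<close>])
  have ut0: "u \<le> t0" unfolding u_def by (rule Phi_inv_le[OF qpos tf(1)]) (use tf(2) q1 in simp)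
  define A where "A = {\<omega>\<in>space M. \<forall>j<p. \<bar>\<Sum>i<n. x i j * \<epsilon> i \<omega>\<bar> \<le> \<sigma> * sqrt (real n) * u}"
  have Am: "A \<in> sets M" unfolding A_def by (rule max_tail(1)[OF P s0 ind nrm n1 col])
  have "1 - 2 * real p * (1 - Phi u) \<le> measure M A"
    unfolding A_def by (rule max_tail(2)[OF P s0 ind nrm n1 col])
  moreover have "2 * real p * (1 - Phi u) \<le> 2 * real p * (1 - q)"
    using Phiu pp by (intro mult_left_mono) auto
  moreover have "2 * real p * (1 - q) = \<alpha>" unfolding q1 using pp by simp
  ultimately have mA: "1 - \<alpha> \<le> measure M A" by linarith
  have upper: "2 * c * \<sigma> * sqrt (real n) * u \<le> 2 * c * sqrt (2 * (2 + \<bar>C\<bar>)) * (\<sigma> * sqrt (real n * ln (real p)))"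
  proof -
    have "2 * c * \<sigma> * sqrt (real n) * u \<le> 2 * c * \<sigma> * sqrt (real n) * (sqrt (2 * (2 + \<bar>C\<bar>)) * sqrt (ln (real p)))"
      using ut0 tf(3) c0 s0 by (intro mult_left_mono) auto
    also have "\<dots> = 2 * c * sqrt (2 * (2 + \<bar>C\<bar>)) * (\<sigma> * sqrt (real n * ln (real p)))"
      by (simp add: real_sqrt_mult)
    finally show ?thesis .
  qed
  show ?thesis
  proof (intro bexI[OF _ Am] conjI ballI mA)
    fix \<omega> assume w: "\<omega> \<in> A"
    have Z: "\<forall>j<p. \<bar>\<Sum>i<n. x i j * \<epsilon> i \<omega>\<bar> \<le> \<sigma> * sqrt (real n) * u" using w unfolding A_def by simp
    have "0 \<le> \<sigma> * sqrt (real n) * u" using Z p2 by (meson abs_ge_zero order_trans zero_less_numeral less_le_trans)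
    hence lz: "real n * linf p (Svec n x (\<lambda>i. \<epsilon> i \<omega>)) \<le> 2 * (\<sigma> * sqrt (real n) * u)"
      by (rule linf_from_Z[OF n1 _ Z])
    show "c * real n * linf p (Svec n x (\<lambda>i. \<epsilon> i \<omega>)) \<le> 2 * c * \<sigma> * sqrt (real n) * Phi_inv (1 - \<alpha> / (2 * real p))"
      using mult_left_mono[OF lz, of c] c0 unfolding u_def q_def by (simp add: algebra_simps)
    show "2 * c * \<sigma> * sqrt (real n) * Phi_inv (1 - \<alpha> / (2 * real p)) \<le> 2 * c * sqrt (2 * (2 + \<bar>C\<bar>)) * (\<sigma> * sqrt (real n * ln (real p)))"
      using upper unfolding u_def q_def .
  qed
qed



lemma opt2_n:
  fixes n p :: nat and x :: "nat \<Rightarrow> nat \<Rightarrow> real" and \<epsilon> :: "nat \<Rightarrow> 'a \<Rightarrow> real"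
  assumes P: "prob_space M" and s0: "0 < \<sigma>"
    and ind: "prob_space.indep_vars M (\<lambda>_. borel) \<epsilon> {..<n}"
    and nrmA: "\<forall>i<n. distributed M lborel (\<epsilon> i) (\<lambda>t. ennreal (normal_density 0 \<sigma> t))"
    and n1: "n \<ge> 1"
    and colA: "\<forall>j<p. (\<Sum>i<n. (x i j)\<^sup>2) = real n"
    and p2: "p \<ge> 2" and a: "0 < \<alpha>" "\<alpha> < 1" and lnC: "ln (1 / \<alpha>) \<le> C * ln (real p)"
    and c0: "0 < c"
  shows "\<exists>A\<in>sets M. 1 - \<alpha> \<le> measure M A \<and> (\<forall>\<omega>\<in>A.
     c * real n * linf p (Svec n x (\<lambda>i. \<epsilon> i \<omega>)) \<le> 2 * c * \<sigma> * Lambda_q M n p x \<sigma> \<epsilon> (1 - \<alpha>) \<and>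
     2 * c * \<sigma> * Lambda_q M n p x \<sigma> \<epsilon> (1 - \<alpha>) \<le> 2 * c * sqrt (2 * (2 + \<bar>C\<bar>)) * (\<sigma> * sqrt (real n * ln (real p))))"
proof -
  have nrm: "\<And>i. i < n \<Longrightarrow> distributed M lborel (\<epsilon> i) (\<lambda>t. ennreal (normal_density 0 \<sigma> t))"
    using nrmA by blast
  have col: "\<And>j. j < p \<Longrightarrow> (\<Sum>i<n. (x i j)\<^sup>2) = real n" using colA by blast
  interpret prob_space M by (rule P)
  define t0 where "t0 = sqrt (2 * ln (2 * real p / \<alpha>))"
  note tf = t0_facts[OF a p2 lnC, folded t0_def]
  have pp: "0 < real p" using p2 by simp
  have rn: "0 < real n" using n1 by simp
  define V where "V = (\<lambda>\<omega>. real n * linf p (\<lambda>j. Svec n x (\<lambda>i. \<epsilon> i \<omega>) j / (2 * \<sigma>)))"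
  define Good where "Good = (\<lambda>u. {\<omega>\<in>space M. \<forall>j<p. \<bar>\<Sum>i<n. x i j * \<epsilon> i \<omega>\<bar> \<le> \<sigma> * sqrt (real n) * u})"
  have Gm: "Good u \<in> sets M" for u unfolding Good_def by (rule max_tail(1)[OF P s0 ind nrm n1 col])
  have Gmeas: "1 - 2 * real p * (1 - Phi u) \<le> measure M (Good u)" for u
    unfolding Good_def by (rule max_tail(2)[OF P s0 ind nrm n1 col])
  have Veq: "{\<omega>\<in>space M. V \<omega> \<le> t} = (if 0 \<le> t then Good (t / sqrt (real n)) else {})" for t
    unfolding V_def Good_def using V_char[OF n1 s0] by auto
  have Vm: "{\<omega>\<in>space M. V \<omega> \<le> t} \<in> sets M" for t unfolding Veq using Gm by auto
  define S where "S = {t. 1 - \<alpha> \<le> measure M {\<omega>\<in>space M. V \<omega> \<le> t}}"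
  have Lq: "Lambda_q M n p x \<sigma> \<epsilon> (1 - \<alpha>) = Inf S" unfolding Lambda_q_def S_def V_def ..
  define t1 where "t1 = sqrt (real n) * t0"
  have t10: "0 \<le> t1" unfolding t1_def using tf(1) by simp
  have "t1 / sqrt (real n) = t0" unfolding t1_def using rn by simp
  hence "measure M {\<omega>\<in>space M. V \<omega> \<le> t1} = measure M (Good t0)" unfolding Veq using t10 by simp
  moreover have "1 - 2 * real p * (1 - Phi t0) \<le> measure M (Good t0)" by (rule Gmeas)
  moreover have "2 * real p * (1 - Phi t0) \<le> \<alpha>"
  proof -
    have "1 - Phi t0 \<le> \<alpha> / (2 * real p)" using Phi_upper_tail[OF tf(1)] tf(2) by simp
    hence "2 * real p * (1 - Phi t0) \<le> 2 * real p * (\<alpha> / (2 * real p))" using pp by (intro mult_left_mono) auto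
    thus ?thesis using pp by simp
  qed
  ultimately have t1S: "t1 \<in> S" unfolding S_def by simp
  have bbS: "bdd_below S"
  proof (rule bdd_belowI[of _ 0])
    fix t assume "t \<in> S"
    show "0 \<le> t"
    proof (rule ccontr)
      assume "\<not> 0 \<le> t"
      hence "measure M {\<omega>\<in>space M. V \<omega> \<le> t} = 0" unfolding Veq by simp
      thus False using \<open>t \<in> S\<close> a unfolding S_def by simp
    qed
  qed
  define \<Lambda> where "\<Lambda> = Inf S"
  have Lt1: "\<Lambda> \<le> t1" unfolding \<Lambda>_def by (rule cInf_lower[OF t1S bbS])
  have mA: "1 - \<alpha> \<le> measure M {\<omega>\<in>space M. V \<omega> \<le> \<Lambda>}"
    unfolding \<Lambda>_def S_def by (rule quantile_attained[OF finite_measure Vm]) (use t1S bbS in \<open>auto simp: S_def\<close>)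
  have upper: "2 * c * \<sigma> * \<Lambda> \<le> 2 * c * sqrt (2 * (2 + \<bar>C\<bar>)) * (\<sigma> * sqrt (real n * ln (real p)))"
  proof -
    have "2 * c * \<sigma> * \<Lambda> \<le> 2 * c * \<sigma> * (sqrt (real n) * (sqrt (2 * (2 + \<bar>C\<bar>)) * sqrt (ln (real p))))"
    proof (rule mult_left_mono)
      have "sqrt (real n) * t0 \<le> sqrt (real n) * (sqrt (2 * (2 + \<bar>C\<bar>)) * sqrt (ln (real p)))"
        using tf(3) by (rule mult_left_mono) simp
      thus "\<Lambda> \<le> sqrt (real n) * (sqrt (2 * (2 + \<bar>C\<bar>)) * sqrt (ln (real p)))"
        using Lt1 unfolding t1_def by linarith
      show "0 \<le> 2 * c * \<sigma>" using c0 s0 by simp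
    qed
    also have "\<dots> = 2 * c * sqrt (2 * (2 + \<bar>C\<bar>)) * (\<sigma> * sqrt (real n * ln (real p)))"
      by (simp add: real_sqrt_mult)
    finally show ?thesis .
  qed
  show ?thesis unfolding Lq \<Lambda>_def[symmetric]
  proof (intro bexI[OF _ Vm] conjI ballI mA)
    fix \<omega> assume w: "\<omega> \<in> {\<omega>\<in>space M. V \<omega> \<le> \<Lambda>}"
    hence "V \<omega> \<le> \<Lambda>" by simp
    hence L0: "0 \<le> \<Lambda>" and Z0: "\<forall>j<p. \<bar>\<Sum>i<n. x i j * \<epsilon> i \<omega>\<bar> \<le> \<sigma> * sqrt (real n) * (\<Lambda> / sqrt (real n))"
      unfolding V_def V_char[OF n1 s0] by auto
    have Z: "\<forall>j<p. \<bar>\<Sum>i<n. x i j * \<epsilon> i \<omega>\<bar> \<le> \<sigma> * \<Lambda>" using Z0 rn by simp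
    have lz: "real n * linf p (Svec n x (\<lambda>i. \<epsilon> i \<omega>)) \<le> 2 * (\<sigma> * \<Lambda>)"
      by (rule linf_from_Z[OF n1 _ Z]) (use L0 s0 in simp)
    show "c * real n * linf p (Svec n x (\<lambda>i. \<epsilon> i \<omega>)) \<le> 2 * c * \<sigma> * \<Lambda>"
      using mult_left_mono[OF lz, of c] c0 by (simp add: algebra_simps)
    show "2 * c * \<sigma> * \<Lambda> \<le> 2 * c * sqrt (2 * (2 + \<bar>C\<bar>)) * (\<sigma> * sqrt (real n * ln (real p)))"
      by (rule upper)
  qed (use mA in simp)
qed



lemma det_rate:
  fixes e f bh b0 :: "nat \<Rightarrow> real"
  assumes n1: "n \<ge> 1" and p1: "p \<ge> 1"
    and nrm: "\<And>j. j < p \<Longrightarrow> En n (\<lambda>i. (x i j)\<^sup>2) = 1"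
    and las: "lasso_sol n p x (\<lambda>i. f i + e i) lam bh"
    and b0: "b0 \<in> vecs p"
    and cp: "c' > 1"
    and lamS: "c' * real n * linf p (Svec n x e) \<le> lam"
    and lamU: "lam \<le> C1 * (\<sigma> * sqrt (real n * ln (real p)))"
    and C10: "0 \<le> C1" and s0: "0 < \<sigma>"
    and kpos: "0 < kappa n p x (supp p b0) m"
    and kC: "1 / kappa n p x (supp p b0) m \<le> CR"
    and sm: "card (supp p b0) \<ge> 1 \<Longrightarrow> k \<ge> 1 \<and> real k \<le> m \<and>
       sqrt (phi n p x (supp p b0) m) * ((c' + 1) / (c' - 1)) * sqrt (real (card (supp p b0)) / real k)
         \<le> kappa n p x (supp p b0) m / 2"
  shows "norm2n n p x (\<lambda>j. bh j - b0 j) \<le> max 4 (8 * CR * C1) *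
     (\<sigma> * sqrt (real (card (supp p b0)) * ln (real p) / real n) + sqrt (En n (\<lambda>i. (f i - xb x p i b0)\<^sup>2)))"
proof -
  define T where "T = supp p b0"
  define s where "s = card T"
  define cs where "cs = sqrt (En n (\<lambda>i. (f i - xb x p i b0)\<^sup>2))"
  define N where "N = norm2n n p x (\<lambda>j. bh j - b0 j)"
  define A where "A = (\<Sum>j\<in>supp p b0. \<bar>bh j - b0 j\<bar>)"
  define B where "B = (\<Sum>j\<in>{..<p}-supp p b0. \<bar>bh j - b0 j\<bar>)"
  define rate where "rate = \<sigma> * sqrt (real s * ln (real p) / real n)"
  define \<kappa> where "\<kappa> = kappa n p x T m"
  define L where "L = lam / real n"
  have rn: "0 < real n" using n1 by simp
  have lp: "0 \<le> ln (real p)" using p1 by simp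
  have rate0: "0 \<le> rate" unfolding rate_def using s0 lp by simp
  have cs0: "0 \<le> cs" unfolding cs_def using En_nonneg[of n "\<lambda>i. (f i - xb x p i b0)\<^sup>2"] by simp
  have N0: "0 \<le> N" unfolding N_def by (rule norm2n_nonneg)
  have A0: "0 \<le> A" unfolding A_def by (simp add: sum_nonneg)
  have M4: "4 \<le> max 4 (8 * CR * C1)" by simp
  have Mge: "8 * CR * C1 \<le> max 4 (8 * CR * C1)" by simp
  have goal_ok: "N \<le> max 4 (8 * CR * C1) * (rate + cs)" if h: "N \<le> 4 * cs \<or> N \<le> 8 * CR * C1 * rate"
  proof -
    have "4 * cs \<le> max 4 (8 * CR * C1) * (rate + cs)"
      using M4 cs0 rate0 by (meson add_increasing mult_mono order_refl zero_le_numeral order_trans)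
    moreover have "8 * CR * C1 * rate \<le> max 4 (8 * CR * C1) * (rate + cs)"
      using Mge cs0 rate0 M4 by (meson add_increasing2 mult_mono order_refl order_trans zero_le_numeral)
    ultimately show ?thesis using h by linarith
  qed
  have lb: "N \<le> 4 * cs \<or> (N\<^sup>2 \<le> 4 * (lam / real n) * A \<and> B \<le> (c' + 1) / (c' - 1) * A)"
    using lasso_basic[OF n1 las b0 cp lamS] unfolding N_def A_def B_def cs_def .
  have L0: "0 \<le> L" unfolding L_def using lamS cp linf_nonneg[of p "Svec n x e"] rn
    by (smt (verit) divide_nonneg_pos mult_nonneg_nonneg of_nat_0_le_iff)
  have LU: "L \<le> C1 * \<sigma> * sqrt (ln (real p) / real n)"
  proof -
    have "L \<le> C1 * (\<sigma> * sqrt (real n * ln (real p))) / real n"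
      unfolding L_def using lamU rn by (simp add: divide_right_mono)
    also have "sqrt (real n * ln (real p)) / real n = sqrt (ln (real p) / real n)"
    proof -
      have sn: "0 < sqrt (real n)" using rn by simp
      have nn: "sqrt (real n) * sqrt (real n) = real n" by simp
      have "sqrt (real n * ln (real p)) / real n = sqrt (real n) * sqrt (ln (real p)) / (sqrt (real n) * sqrt (real n))"
        by (simp only: nn real_sqrt_mult)
      also have "\<dots> = sqrt (ln (real p)) / sqrt (real n)" using sn by (simp del: real_sqrt_mult_self)
      finally show ?thesis by (simp add: real_sqrt_divide)
    qed
    hence "C1 * (\<sigma> * sqrt (real n * ln (real p))) / real n = C1 * \<sigma> * sqrt (ln (real p) / real n)"
      by (metis mult.assoc times_divide_eq_right)
    finally show ?thesis .
  qed
  show ?thesis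
  proof (cases "N \<le> 4 * cs")
    case True
    thus ?thesis using goal_ok unfolding N_def cs_def rate_def s_def T_def by blast
  next
    case False
    hence Nsq: "N\<^sup>2 \<le> 4 * L * A" and cone: "B \<le> (c' + 1) / (c' - 1) * A"
      using lb unfolding L_def by auto
    show ?thesis
    proof (cases "s = 0")
      case True
      have fT: "finite T" unfolding T_def supp_def by simp
      hence "T = {}" using True unfolding s_def by simp
      hence "A = 0" unfolding A_def T_def by simp
      hence "N = 0" using Nsq by simp
      thus ?thesis using goal_ok cs0 unfolding N_def cs_def rate_def s_def T_def by simp
    next
      case False
      hence s1: "card (supp p b0) \<ge> 1" unfolding s_def T_def by simp
      from sm[OF s1] have k1: "k \<ge> 1" and km: "real k \<le> m"
        and small: "sqrt (phi n p x T m) * ((c' + 1) / (c' - 1)) * sqrt (real s / real k) \<le> \<kappa> / 2"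
        unfolding s_def T_def \<kappa>_def by auto
      have Tp: "T \<subseteq> {..<p}" unfolding T_def supp_def by auto
      have kap0: "0 < \<kappa>" unfolding \<kappa>_def T_def using kpos .
      have kap0': "0 < kappa n p x T m" using kap0 unfolding \<kappa>_def .
      have cm: "real (card (supp p d - T)) \<le> m" if "card (supp p d - T) \<le> k" for d
      proof -
        have "real (card (supp p d - T)) \<le> real k" using that by simp
        thus ?thesis using km by linarith
      qed
      have lo: "\<kappa> * l2 p d \<le> norm2n n p x d" if "d \<in> vecs p" "card (supp p d - T) \<le> k" for d
        unfolding \<kappa>_def using ratio_bounds(1)[OF n1 nrm kap0' that(1) cm[OF that(2)]] .
      have hi: "norm2n n p x d \<le> sqrt (phi n p x T m) * l2 p d" if "d \<in> vecs p" "card (supp p d - T) \<le> k" for d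
        using ratio_bounds(2)[OF n1 nrm kap0' that(1) cm[OF that(2)]] .
      define d1 where "d1 = (\<lambda>j::nat. if j = 0 then (1::real) else 0)"
      have d1v: "d1 \<in> vecs p" unfolding d1_def vecs_def using p1 by auto
      have d1s: "supp p d1 \<subseteq> {0}" unfolding d1_def supp_def by auto
      have "card (supp p d1 - T) \<le> card {0::nat}"
        by (rule card_mono) (use d1s in auto)
      hence d1c: "card (supp p d1 - T) \<le> k" using k1 by simp
      have d1l: "0 < l2 p d1" by (rule l2_pos[OF d1v]) (auto simp: d1_def fun_eq_iff)
      have "0 \<le> sqrt (phi n p x T m) * l2 p d1"
        using hi[OF d1v d1c] norm2n_nonneg[of n p x d1] by linarith
      hence g0: "0 \<le> sqrt (phi n p x T m)" using d1l by (simp add: zero_le_mult_iff)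
      have bhv: "bh \<in> vecs p" using las unfolding lasso_sol_def by simp
      have dv: "(\<lambda>j. bh j - b0 j) \<in> vecs p" using bhv b0 unfolding vecs_def by simp
      have cb0: "0 \<le> (c' + 1) / (c' - 1)" using cp by simp
      have re: "(\<kappa> - sqrt (phi n p x T m) * ((c' + 1) / (c' - 1)) * sqrt (real (card T) / real k))
                * L2_set (\<lambda>j. bh j - b0 j) T \<le> N"
        unfolding N_def
        by (rule re_bound[OF k1 g0 _ cb0 lo hi Tp dv]) (use kap0 cone in \<open>auto simp: A_def B_def T_def\<close>)
      have L2T0: "0 \<le> L2_set (\<lambda>j. bh j - b0 j) T" by simp
      have "(\<kappa> / 2) * L2_set (\<lambda>j. bh j - b0 j) T \<le> N"
      proof -
        have "(\<kappa> / 2) * L2_set (\<lambda>j. bh j - b0 j) T \<le>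
          (\<kappa> - sqrt (phi n p x T m) * ((c' + 1) / (c' - 1)) * sqrt (real (card T) / real k)) * L2_set (\<lambda>j. bh j - b0 j) T"
          using small L2T0 unfolding s_def by (intro mult_right_mono) auto
        thus ?thesis using re by linarith
      qed
      hence "L2_set (\<lambda>j. bh j - b0 j) T \<le> 2 * N / \<kappa>" using kap0 by (simp add: field_simps)
      also have "2 * N / \<kappa> = 2 * N * (1 / \<kappa>)" by simp
      also have "\<dots> \<le> 2 * N * CR" using kC N0 unfolding \<kappa>_def T_def by (intro mult_left_mono) auto
      finally have L2b: "L2_set (\<lambda>j. bh j - b0 j) T \<le> 2 * N * CR" .
      have "A \<le> sqrt (real s) * L2_set (\<lambda>j. bh j - b0 j) T"
        unfolding A_def s_def T_def by (rule L1_le_sqrt_card_L2)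
      also have "\<dots> \<le> sqrt (real s) * (2 * N * CR)" using L2b by (intro mult_left_mono) auto
      finally have Ab: "A \<le> sqrt (real s) * (2 * N * CR)" .
      have "N\<^sup>2 \<le> 4 * L * (sqrt (real s) * (2 * N * CR))"
        using Nsq Ab L0 by (smt (verit) mult_left_mono mult_nonneg_nonneg zero_le_numeral)
      hence "N * N \<le> N * (8 * CR * L * sqrt (real s))" by (simp add: power2_eq_square algebra_simps)
      have CR0: "0 \<le> CR" using kC kap0 unfolding \<kappa>_def T_def by (smt (verit) divide_pos_pos)
      hence NL: "N \<le> 8 * CR * L * sqrt (real s)"
      proof (cases "N = 0")
        case True thus ?thesis using CR0 L0 by simp
      next
        case False hence "0 < N" using N0 by simp
        thus ?thesis using \<open>N * N \<le> N * (8 * CR * L * sqrt (real s))\<close> by simp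
      qed
      have "8 * CR * L * sqrt (real s) \<le> 8 * CR * (C1 * \<sigma> * sqrt (ln (real p) / real n)) * sqrt (real s)"
        using LU CR0 by (intro mult_right_mono mult_left_mono) auto
      also have "\<dots> = 8 * CR * C1 * rate"
        unfolding rate_def by (simp add: real_sqrt_mult real_sqrt_divide algebra_simps)
      finally have "N \<le> 8 * CR * C1 * rate" using NL by linarith
      thus ?thesis using goal_ok unfolding N_def cs_def rate_def s_def T_def by blast
    qed
  qed
qed



lemma small_lemma:
  fixes s :: nat and ln_n \<kappa> \<phi> CR cb :: real
  assumes CR0: "0 < CR" and cb0: "0 \<le> cb" and s1: "s \<ge> 1"
    and kap: "0 < \<kappa>" "1 / \<kappa> \<le> CR" and ph: "\<phi> \<le> CR"
    and ln2: "2 \<le> ln_n" and lnbig: "2 * (2 * CR * sqrt CR * (cb + 1))\<^sup>2 \<le> ln_n"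
  defines "k \<equiv> nat \<lfloor>real s * ln_n\<rfloor>"
  shows "k \<ge> 1 \<and> real k \<le> real s * ln_n \<and> sqrt \<phi> * cb * sqrt (real s / real k) \<le> \<kappa> / 2"
proof -
  define m where "m = real s * ln_n"
  have rs: "1 \<le> real s" using s1 by simp
  have m2: "2 \<le> m" unfolding m_def using mult_mono[OF rs ln2] by simp
  have kfl: "real k = of_int \<lfloor>m\<rfloor>" unfolding k_def m_def using m2 by (simp add: m_def)
  have "m - 1 < real k" unfolding kfl by linarith
  hence kge: "m / 2 \<le> real k" using m2 by linarith
  have k1: "k \<ge> 1" using kge m2 by linarith
  have km: "real k \<le> m" unfolding kfl by simp
  have kpos: "0 < real k" using k1 by simp
  have lnpos: "0 < ln_n" using ln2 by simp
  have "real s / real k \<le> real s / (m / 2)"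
    using kge m2 rs by (intro divide_left_mono) auto
  also have "\<dots> = 2 / ln_n" unfolding m_def using rs lnpos by simp
  finally have sk: "real s / real k \<le> 2 / ln_n" .
  define D where "D = 2 * CR * sqrt CR * (cb + 1)"
  have Dpos: "0 < D" unfolding D_def using CR0 cb0 by simp
  have "2 / ln_n \<le> 2 / (2 * D\<^sup>2)"
    using lnbig Dpos lnpos unfolding D_def[symmetric] by (intro divide_left_mono) auto
  hence "2 / ln_n \<le> 1 / D\<^sup>2" by simp
  hence "sqrt (real s / real k) \<le> sqrt (1 / D\<^sup>2)" using sk by (intro real_sqrt_le_mono) linarith
  hence sq: "sqrt (real s / real k) \<le> 1 / D" using Dpos by (simp add: real_sqrt_divide)
  have sphi: "sqrt \<phi> \<le> sqrt CR" using ph by simp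
  have k_ge: "1 / CR \<le> \<kappa>" using kap CR0 by (simp add: field_simps)
  have "sqrt \<phi> * cb * sqrt (real s / real k) \<le> sqrt CR * (cb + 1) * (1 / D)"
  proof -
    have a: "sqrt \<phi> * cb \<le> sqrt CR * (cb + 1)"
    proof (cases "0 \<le> \<phi>")
      case True
      hence "sqrt \<phi> * cb \<le> sqrt CR * cb" using sphi cb0 by (intro mult_right_mono) auto
      also have "\<dots> \<le> sqrt CR * (cb + 1)" using CR0 by (intro mult_left_mono) auto
      finally show ?thesis .
    next
      case False
      hence "sqrt \<phi> * cb \<le> 0" using cb0 by (simp add: mult_nonpos_nonneg)
      also have "0 \<le> sqrt CR * (cb + 1)" using CR0 cb0 by simp
      finally show ?thesis .
    qed
    have b: "0 \<le> sqrt (real s / real k)" by simp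
    show ?thesis
    proof (cases "0 \<le> sqrt \<phi> * cb")
      case True
      thus ?thesis using mult_mono[OF a sq] b CR0 cb0 by simp
    next
      case False
      hence "sqrt \<phi> * cb * sqrt (real s / real k) \<le> 0" using b by (simp add: mult_nonpos_nonneg)
      also have "0 \<le> sqrt CR * (cb + 1) * (1 / D)" using CR0 cb0 Dpos by simp
      finally show ?thesis .
    qed
  qed
  also have "sqrt CR * (cb + 1) * (1 / D) = 1 / (2 * CR)"
  proof -
    have x0: "sqrt CR * (cb + 1) \<noteq> 0" using CR0 cb0 by simp
    have "D = (2 * CR) * (sqrt CR * (cb + 1))" unfolding D_def by simp
    thus ?thesis using x0 by simp
  qed
  also have "\<dots> \<le> \<kappa> / 2" using k_ge by simp
  finally show ?thesis using k1 km unfolding m_def by simp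
qed



lemma col_from_normalized:
  assumes "n \<ge> 1" "En n (\<lambda>i. (x i j)\<^sup>2) = 1"
  shows "(\<Sum>i<n. (x i j)\<^sup>2) = real n"
  using assms unfolding En_def by (simp add: field_simps)

lemma prob_inter_ge:
  assumes P: "prob_space M" and A: "A \<in> sets M" and B: "B \<in> sets M"
  shows "measure M A + measure M B - 1 \<le> measure M (A \<inter> B)"
proof -
  interpret prob_space M by (rule P)
  have eq: "space M - (A \<inter> B) = (space M - A) \<union> (space M - B)" by blast
  have sA: "space M - A \<in> sets M" using A by auto
  have sB: "space M - B \<in> sets M" using B by auto
  have sAB: "A \<inter> B \<in> sets M" using A B by auto
  have "measure M (space M - (A \<inter> B)) \<le> measure M (space M - A) + measure M (space M - B)"
    unfolding eq by (rule measure_Un_le[OF sA sB])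
  moreover have "measure M (space M - (A \<inter> B)) = 1 - measure M (A \<inter> B)" by (rule prob_compl[OF sAB])
  moreover have "measure M (space M - A) = 1 - measure M A" by (rule prob_compl[OF A])
  moreover have "measure M (space M - B) = 1 - measure M B" by (rule prob_compl[OF B])
  ultimately show ?thesis by linarith
qed

lemma ev_ln: "eventually (\<lambda>n. X \<le> ln (real n)) sequentially"
proof -
  have "filterlim (\<lambda>n. ln (real n)) at_top sequentially"
    by (rule filterlim_compose[OF ln_at_top filterlim_real_sequentially])
  thus ?thesis by (simp add: filterlim_at_top)
qed

lemma good_event:
  fixes M :: "nat \<Rightarrow> 'a measure"
    and p :: "nat \<Rightarrow> nat"
    and x :: "nat \<Rightarrow> nat \<Rightarrow> nat \<Rightarrow> real"
    and sig :: "nat \<Rightarrow> real"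
    and eps :: "nat \<Rightarrow> nat \<Rightarrow> 'a \<Rightarrow> real"
    and lam :: "nat \<Rightarrow> 'a \<Rightarrow> real"
    and c :: real
  assumes prob: "\<And>n. prob_space (M n)"
    and sigma_pos: "\<And>n. 0 < sig n"
    and noise_indep: "\<And>n. n \<ge> 1 \<Longrightarrow> prob_space.indep_vars (M n) (\<lambda>_. borel) (eps n) {..<n}"
    and noise_normal: "\<And>n i. n \<ge> 1 \<Longrightarrow> i < n \<Longrightarrow>
          distributed (M n) lborel (eps n i) (\<lambda>t. ennreal (normal_density 0 (sig n) t))"
    and p_lim: "filterlim p at_top sequentially"
    and normalized: "\<And>n j. n \<ge> 1 \<Longrightarrow> j < p n \<Longrightarrow> En n (\<lambda>i. (x n i j)\<^sup>2) = 1"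
    and c_gt: "c > 1"
    and lambda_choice:
      "(\<exists>alpha :: nat \<Rightarrow> real. (\<forall>n. 0 < alpha n) \<and> alpha \<longlonglongrightarrow> 0 \<and>
          (\<exists>C. \<forall>\<^sub>F n in sequentially. ln (1 / alpha n) \<le> C * ln (real (p n))) \<and>
          (\<forall>n \<omega>. lam n \<omega> = 2 * c * sig n * sqrt (real n) * Phi_inv (1 - alpha n / (2 * real (p n)))))
     \<or> (\<exists>alpha :: nat \<Rightarrow> real. (\<forall>n. 0 < alpha n) \<and> alpha \<longlonglongrightarrow> 0 \<and>
          (\<exists>C. \<forall>\<^sub>F n in sequentially. ln (1 / alpha n) \<le> C * ln (real (p n))) \<and>
          (\<forall>n \<omega>. lam n \<omega> = 2 * c * sig n * Lambda_q (M n) n (p n) (x n) (sig n) (eps n) (1 - alpha n)))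
     \<or> (bigOP M lam (\<lambda>n. sig n * sqrt (real n * ln (real (p n)))) \<and>
        (\<exists>c'>1. whp M (\<lambda>n \<omega>. c' * real n * linf (p n) (Svec n (x n) (\<lambda>i. eps n i \<omega>)) \<le> lam n \<omega>)))"
  shows "\<exists>c''>1. \<forall>e>0. \<exists>C1\<ge>0. \<exists>N. \<forall>n\<ge>N. \<exists>A\<in>sets (M n). 1 - e \<le> measure (M n) A \<and>
     (\<forall>\<omega>\<in>A. c'' * real n * linf (p n) (Svec n (x n) (\<lambda>i. eps n i \<omega>)) \<le> lam n \<omega> \<and>
             lam n \<omega> \<le> C1 * (sig n * sqrt (real n * ln (real (p n)))))"
proof -
  have c0: "0 < c" using c_gt by simp
  have p2ev: "eventually (\<lambda>n. 2 \<le> p n) sequentially" using p_lim by (simp add: filterlim_at_top)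
  have n1ev: "eventually (\<lambda>n. 1 \<le> n) sequentially" by (rule eventually_ge_at_top)
  have col: "\<And>n j. n \<ge> 1 \<Longrightarrow> j < p n \<Longrightarrow> (\<Sum>i<n. (x n i j)\<^sup>2) = real n"
    by (rule col_from_normalized[OF _ normalized])
  show ?thesis
  proof (rule disjE[OF lambda_choice])
    assume o1: "\<exists>alpha :: nat \<Rightarrow> real. (\<forall>n. 0 < alpha n) \<and> alpha \<longlonglongrightarrow> 0 \<and>
          (\<exists>C. \<forall>\<^sub>F n in sequentially. ln (1 / alpha n) \<le> C * ln (real (p n))) \<and>
          (\<forall>n \<omega>. lam n \<omega> = 2 * c * sig n * sqrt (real n) * Phi_inv (1 - alpha n / (2 * real (p n))))"
    from o1 obtain alpha C where a0: "\<forall>n. 0 < alpha n" and alim: "alpha \<longlonglongrightarrow> 0"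
      and lnC: "\<forall>\<^sub>F n in sequentially. ln (1 / alpha n) \<le> C * ln (real (p n))"
      and leq: "\<forall>n \<omega>. lam n \<omega> = 2 * c * sig n * sqrt (real n) * Phi_inv (1 - alpha n / (2 * real (p n)))"
      by blast
    show ?thesis
    proof (rule exI[of _ c], intro conjI c_gt allI impI)
      fix e :: real assume e0: "0 < e"
      have aev: "eventually (\<lambda>n. alpha n < min e 1) sequentially"
        by (rule order_tendstoD(2)[OF alim]) (use e0 in simp)
      have "eventually (\<lambda>n. 1 \<le> n \<and> 2 \<le> p n \<and> alpha n < min e 1 \<and> ln (1 / alpha n) \<le> C * ln (real (p n))) sequentially"
        by (intro eventually_conj n1ev p2ev aev lnC)
      then obtain N where N: "\<And>n. n \<ge> N \<Longrightarrow> 1 \<le> n \<and> 2 \<le> p n \<and> alpha n < min e 1 \<and> ln (1 / alpha n) \<le> C * ln (real (p n))"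
        unfolding eventually_sequentially by blast
      show "\<exists>C1\<ge>0. \<exists>N. \<forall>n\<ge>N. \<exists>A\<in>sets (M n). 1 - e \<le> measure (M n) A \<and>
         (\<forall>\<omega>\<in>A. c * real n * linf (p n) (Svec n (x n) (\<lambda>i. eps n i \<omega>)) \<le> lam n \<omega> \<and>
             lam n \<omega> \<le> C1 * (sig n * sqrt (real n * ln (real (p n)))))"
      proof (intro exI[of _ "2 * c * sqrt (2 * (2 + \<bar>C\<bar>))"] conjI exI[of _ N] allI impI)
        show "0 \<le> 2 * c * sqrt (2 * (2 + \<bar>C\<bar>))" using c0 by simp
        fix n assume "N \<le> n"
        note Nn = N[OF this]
        have n1: "n \<ge> 1" using Nn by simp
        obtain A where A: "A \<in> sets (M n)" "1 - alpha n \<le> measure (M n) A"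
          "\<forall>\<omega>\<in>A. c * real n * linf (p n) (Svec n (x n) (\<lambda>i. eps n i \<omega>)) \<le> 2 * c * sig n * sqrt (real n) * Phi_inv (1 - alpha n / (2 * real (p n))) \<and>
             2 * c * sig n * sqrt (real n) * Phi_inv (1 - alpha n / (2 * real (p n))) \<le> 2 * c * sqrt (2 * (2 + \<bar>C\<bar>)) * (sig n * sqrt (real n * ln (real (p n))))"
        proof -
          have p2: "2 \<le> p n" and a2: "alpha n < 1" and lnc: "ln (1 / alpha n) \<le> C * ln (real (p n))"
            using Nn by auto
          have a1: "0 < alpha n" using a0 by simp
          have nrmA: "\<forall>i<n. distributed (M n) lborel (eps n i) (\<lambda>t. ennreal (normal_density 0 (sig n) t))"
            using noise_normal[OF n1] by blast
          have colA: "\<forall>j<p n. (\<Sum>i<n. (x n i j)\<^sup>2) = real n" using col[OF n1] by blast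
          show ?thesis
            using opt1_n[where M="M n" and \<sigma>="sig n" and \<epsilon>="eps n" and x="x n" and p="p n" and n=n,
                 OF prob sigma_pos noise_indep[OF n1] nrmA n1 colA p2 a1 a2 lnc c0]
            by (blast intro: that)
        qed
        show "\<exists>A\<in>sets (M n). 1 - e \<le> measure (M n) A \<and>
         (\<forall>\<omega>\<in>A. c * real n * linf (p n) (Svec n (x n) (\<lambda>i. eps n i \<omega>)) \<le> lam n \<omega> \<and>
             lam n \<omega> \<le> 2 * c * sqrt (2 * (2 + \<bar>C\<bar>)) * (sig n * sqrt (real n * ln (real (p n)))))"
          using A Nn leq by (intro bexI[OF _ A(1)]) auto
      qed
    qed
  next
    assume o23: "(\<exists>alpha :: nat \<Rightarrow> real. (\<forall>n. 0 < alpha n) \<and> alpha \<longlonglongrightarrow> 0 \<and>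
          (\<exists>C. \<forall>\<^sub>F n in sequentially. ln (1 / alpha n) \<le> C * ln (real (p n))) \<and>
          (\<forall>n \<omega>. lam n \<omega> = 2 * c * sig n * Lambda_q (M n) n (p n) (x n) (sig n) (eps n) (1 - alpha n)))
     \<or> (bigOP M lam (\<lambda>n. sig n * sqrt (real n * ln (real (p n)))) \<and>
        (\<exists>c'>1. whp M (\<lambda>n \<omega>. c' * real n * linf (p n) (Svec n (x n) (\<lambda>i. eps n i \<omega>)) \<le> lam n \<omega>)))"
    show ?thesis
  proof (rule disjE[OF o23])
    assume o2: "\<exists>alpha :: nat \<Rightarrow> real. (\<forall>n. 0 < alpha n) \<and> alpha \<longlonglongrightarrow> 0 \<and>
          (\<exists>C. \<forall>\<^sub>F n in sequentially. ln (1 / alpha n) \<le> C * ln (real (p n))) \<and>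
          (\<forall>n \<omega>. lam n \<omega> = 2 * c * sig n * Lambda_q (M n) n (p n) (x n) (sig n) (eps n) (1 - alpha n))"
    from o2 obtain alpha C where a0: "\<forall>n. 0 < alpha n" and alim: "alpha \<longlonglongrightarrow> 0"
      and lnC: "\<forall>\<^sub>F n in sequentially. ln (1 / alpha n) \<le> C * ln (real (p n))"
      and leq: "\<forall>n \<omega>. lam n \<omega> = 2 * c * sig n * Lambda_q (M n) n (p n) (x n) (sig n) (eps n) (1 - alpha n)"
      by blast
    show ?thesis
    proof (rule exI[of _ c], intro conjI c_gt allI impI)
      fix e :: real assume e0: "0 < e"
      have aev: "eventually (\<lambda>n. alpha n < min e 1) sequentially"
        by (rule order_tendstoD(2)[OF alim]) (use e0 in simp)
      have "eventually (\<lambda>n. 1 \<le> n \<and> 2 \<le> p n \<and> alpha n < min e 1 \<and> ln (1 / alpha n) \<le> C * ln (real (p n))) sequentially"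
        by (intro eventually_conj n1ev p2ev aev lnC)
      then obtain N where N: "\<And>n. n \<ge> N \<Longrightarrow> 1 \<le> n \<and> 2 \<le> p n \<and> alpha n < min e 1 \<and> ln (1 / alpha n) \<le> C * ln (real (p n))"
        unfolding eventually_sequentially by blast
      show "\<exists>C1\<ge>0. \<exists>N. \<forall>n\<ge>N. \<exists>A\<in>sets (M n). 1 - e \<le> measure (M n) A \<and>
         (\<forall>\<omega>\<in>A. c * real n * linf (p n) (Svec n (x n) (\<lambda>i. eps n i \<omega>)) \<le> lam n \<omega> \<and>
             lam n \<omega> \<le> C1 * (sig n * sqrt (real n * ln (real (p n)))))"
      proof (intro exI[of _ "2 * c * sqrt (2 * (2 + \<bar>C\<bar>))"] conjI exI[of _ N] allI impI)
        show "0 \<le> 2 * c * sqrt (2 * (2 + \<bar>C\<bar>))" using c0 by simp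
        fix n assume "N \<le> n"
        note Nn = N[OF this]
        have n1: "n \<ge> 1" using Nn by simp
        obtain A where A: "A \<in> sets (M n)" "1 - alpha n \<le> measure (M n) A"
          "\<forall>\<omega>\<in>A. c * real n * linf (p n) (Svec n (x n) (\<lambda>i. eps n i \<omega>)) \<le> 2 * c * sig n * Lambda_q (M n) n (p n) (x n) (sig n) (eps n) (1 - alpha n) \<and>
             2 * c * sig n * Lambda_q (M n) n (p n) (x n) (sig n) (eps n) (1 - alpha n) \<le> 2 * c * sqrt (2 * (2 + \<bar>C\<bar>)) * (sig n * sqrt (real n * ln (real (p n))))"
        proof -
          have p2: "2 \<le> p n" and a2: "alpha n < 1" and lnc: "ln (1 / alpha n) \<le> C * ln (real (p n))"
            using Nn by auto
          have a1: "0 < alpha n" using a0 by simp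
          have nrmA: "\<forall>i<n. distributed (M n) lborel (eps n i) (\<lambda>t. ennreal (normal_density 0 (sig n) t))"
            using noise_normal[OF n1] by blast
          have colA: "\<forall>j<p n. (\<Sum>i<n. (x n i j)\<^sup>2) = real n" using col[OF n1] by blast
          show ?thesis
            using opt2_n[where M="M n" and \<sigma>="sig n" and \<epsilon>="eps n" and x="x n" and p="p n" and n=n,
                 OF prob sigma_pos noise_indep[OF n1] nrmA n1 colA p2 a1 a2 lnc c0]
            by (blast intro: that)
        qed
        show "\<exists>A\<in>sets (M n). 1 - e \<le> measure (M n) A \<and>
         (\<forall>\<omega>\<in>A. c * real n * linf (p n) (Svec n (x n) (\<lambda>i. eps n i \<omega>)) \<le> lam n \<omega> \<and>
             lam n \<omega> \<le> 2 * c * sqrt (2 * (2 + \<bar>C\<bar>)) * (sig n * sqrt (real n * ln (real (p n)))))"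
          using A Nn leq by (intro bexI[OF _ A(1)]) auto
      qed
    qed
  next
    assume o3c: "bigOP M lam (\<lambda>n. sig n * sqrt (real n * ln (real (p n)))) \<and>
        (\<exists>c'>1. whp M (\<lambda>n \<omega>. c' * real n * linf (p n) (Svec n (x n) (\<lambda>i. eps n i \<omega>)) \<le> lam n \<omega>))"
    hence o3: "bigOP M lam (\<lambda>n. sig n * sqrt (real n * ln (real (p n))))"
        "\<exists>c'>1. whp M (\<lambda>n \<omega>. c' * real n * linf (p n) (Svec n (x n) (\<lambda>i. eps n i \<omega>)) \<le> lam n \<omega>)"
      by auto
    from o3(2) obtain c' where c'1: "c' > 1"
      and W: "whp M (\<lambda>n \<omega>. c' * real n * linf (p n) (Svec n (x n) (\<lambda>i. eps n i \<omega>)) \<le> lam n \<omega>)"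
      by blast
    show ?thesis
    proof (rule exI[of _ c'], intro conjI c'1 allI impI)
      fix e :: real assume e0: "0 < e"
      have e2: "0 < e / 2" using e0 by simp
      obtain C N1 where CN: "\<forall>n\<ge>N1. \<exists>A\<in>sets (M n). 1 - e / 2 \<le> measure (M n) A \<and>
          (\<forall>\<omega>\<in>A. \<bar>lam n \<omega>\<bar> \<le> C * (sig n * sqrt (real n * ln (real (p n)))))"
        using o3(1) e2 unfolding bigOP_def by blast
      obtain N2 where N2: "\<forall>n\<ge>N2. \<exists>A\<in>sets (M n). 1 - e / 2 \<le> measure (M n) A \<and>
          (\<forall>\<omega>\<in>A. c' * real n * linf (p n) (Svec n (x n) (\<lambda>i. eps n i \<omega>)) \<le> lam n \<omega>)"
        using W e2 unfolding whp_def by blast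
      show "\<exists>C1\<ge>0. \<exists>N. \<forall>n\<ge>N. \<exists>A\<in>sets (M n). 1 - e \<le> measure (M n) A \<and>
         (\<forall>\<omega>\<in>A. c' * real n * linf (p n) (Svec n (x n) (\<lambda>i. eps n i \<omega>)) \<le> lam n \<omega> \<and>
             lam n \<omega> \<le> C1 * (sig n * sqrt (real n * ln (real (p n)))))"
      proof (intro exI[of _ "\<bar>C\<bar>"] conjI exI[of _ "max N1 N2"] allI impI)
        show "0 \<le> \<bar>C\<bar>" by simp
        fix n assume "max N1 N2 \<le> n"
        hence nN: "N1 \<le> n" "N2 \<le> n" by auto
        obtain A1 where A1: "A1 \<in> sets (M n)" "1 - e / 2 \<le> measure (M n) A1"
          "\<forall>\<omega>\<in>A1. \<bar>lam n \<omega>\<bar> \<le> C * (sig n * sqrt (real n * ln (real (p n))))"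
          using CN nN(1) by blast
        obtain A2 where A2: "A2 \<in> sets (M n)" "1 - e / 2 \<le> measure (M n) A2"
          "\<forall>\<omega>\<in>A2. c' * real n * linf (p n) (Svec n (x n) (\<lambda>i. eps n i \<omega>)) \<le> lam n \<omega>"
          using N2 nN(2) by blast
        have b0: "0 \<le> sig n * sqrt (real n * ln (real (p n)))"
        proof -
          have "0 \<le> ln (real (p n))" by (cases "p n = 0") auto
          thus ?thesis using sigma_pos[of n] by simp
        qed
        have m: "1 - e \<le> measure (M n) (A1 \<inter> A2)"
          using prob_inter_ge[OF prob A1(1) A2(1)] A1(2) A2(2) by linarith
        show "\<exists>A\<in>sets (M n). 1 - e \<le> measure (M n) A \<and>
         (\<forall>\<omega>\<in>A. c' * real n * linf (p n) (Svec n (x n) (\<lambda>i. eps n i \<omega>)) \<le> lam n \<omega> \<and>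
             lam n \<omega> \<le> \<bar>C\<bar> * (sig n * sqrt (real n * ln (real (p n)))))"
        proof (intro bexI[of _ "A1 \<inter> A2"] conjI ballI m)
          fix \<omega> assume w: "\<omega> \<in> A1 \<inter> A2"
          show "c' * real n * linf (p n) (Svec n (x n) (\<lambda>i. eps n i \<omega>)) \<le> lam n \<omega>" using w A2(3) by blast
          have "lam n \<omega> \<le> C * (sig n * sqrt (real n * ln (real (p n))))" using w A1(3) by fastforce
          also have "\<dots> \<le> \<bar>C\<bar> * (sig n * sqrt (real n * ln (real (p n))))"
            using b0 by (intro mult_right_mono) auto
          finally show "lam n \<omega> \<le> \<bar>C\<bar> * (sig n * sqrt (real n * ln (real (p n))))" .
        qed (use A1(1) A2(1) in auto)
      qed
    qed
  qed
  qed
qed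



theorem corollary1:
  fixes M :: "nat \<Rightarrow> 'a measure"
    and p :: "nat \<Rightarrow> nat"
    and x :: "nat \<Rightarrow> nat \<Rightarrow> nat \<Rightarrow> real"
    and f :: "nat \<Rightarrow> nat \<Rightarrow> real"
    and sig :: "nat \<Rightarrow> real"
    and eps :: "nat \<Rightarrow> nat \<Rightarrow> 'a \<Rightarrow> real"
    and beta0 :: "nat \<Rightarrow> nat \<Rightarrow> real"
    and lam :: "nat \<Rightarrow> 'a \<Rightarrow> real"
    and betahat :: "nat \<Rightarrow> 'a \<Rightarrow> nat \<Rightarrow> real"
    and c :: real
  defines "s \<equiv> \<lambda>n. l0 (p n) (beta0 n)"
    and "T \<equiv> \<lambda>n. supp (p n) (beta0 n)"
    and "cs \<equiv> \<lambda>n. sqrt (En n (\<lambda>i. (f n i - xb (x n) (p n) i (beta0 n))\<^sup>2))"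
  assumes prob: "\<And>n. prob_space (M n)"
    and sigma_pos: "\<And>n. 0 < sig n"
    and noise_indep: "\<And>n. n \<ge> 1 \<Longrightarrow> prob_space.indep_vars (M n) (\<lambda>_. borel) (eps n) {..<n}"
    and noise_normal: "\<And>n i. n \<ge> 1 \<Longrightarrow> i < n \<Longrightarrow>
          distributed (M n) lborel (eps n i) (\<lambda>t. ennreal (normal_density 0 (sig n) t))"
    and p_lim: "filterlim p at_top sequentially"
    and const_col: "\<And>n. n \<ge> 1 \<Longrightarrow> \<exists>j<p n. \<forall>i<n. x n i j = 1"
    and normalized: "\<And>n j. n \<ge> 1 \<Longrightarrow> j < p n \<Longrightarrow> En n (\<lambda>i. (x n i j)\<^sup>2) = 1"
    and beta0_opt: "\<And>n. n \<ge> 1 \<Longrightarrow> oracle_sol n (p n) (x n) (f n) (sig n) (beta0 n)"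
    and cs_bound: "\<exists>K. \<forall>n\<ge>1. cs n \<le> K * sig n * sqrt (real (s n) / real n)"
    and RSE: "\<exists>C. \<forall>\<^sub>F n in sequentially.
          0 < kappa n (p n) (x n) (T n) (real (s n) * ln (real n)) \<and>
          1 / kappa n (p n) (x n) (T n) (real (s n) * ln (real n)) \<le> C \<and>
          phi n (p n) (x n) (T n) (real (s n) * ln (real n)) \<le> C \<and>
          mu n (p n) (x n) (T n) (real (s n) * ln (real n)) \<le> C"
    and c_gt: "c > 1"
    and lambda_choice:
      "(\<exists>alpha :: nat \<Rightarrow> real. (\<forall>n. 0 < alpha n) \<and> alpha \<longlonglongrightarrow> 0 \<and>
          (\<exists>C. \<forall>\<^sub>F n in sequentially. ln (1 / alpha n) \<le> C * ln (real (p n))) \<and>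
          (\<forall>n \<omega>. lam n \<omega> = 2 * c * sig n * sqrt (real n) * Phi_inv (1 - alpha n / (2 * real (p n)))))
     \<or> (\<exists>alpha :: nat \<Rightarrow> real. (\<forall>n. 0 < alpha n) \<and> alpha \<longlonglongrightarrow> 0 \<and>
          (\<exists>C. \<forall>\<^sub>F n in sequentially. ln (1 / alpha n) \<le> C * ln (real (p n))) \<and>
          (\<forall>n \<omega>. lam n \<omega> = 2 * c * sig n * Lambda_q (M n) n (p n) (x n) (sig n) (eps n) (1 - alpha n)))
     \<or> (bigOP M lam (\<lambda>n. sig n * sqrt (real n * ln (real (p n)))) \<and>
        (\<exists>c'>1. whp M (\<lambda>n \<omega>. c' * real n * linf (p n) (Svec n (x n) (\<lambda>i. eps n i \<omega>)) \<le> lam n \<omega>)))"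
    and lasso: "\<And>n \<omega>. n \<ge> 1 \<Longrightarrow> \<omega> \<in> space (M n) \<Longrightarrow>
          lasso_sol n (p n) (x n) (\<lambda>i. f n i + eps n i \<omega>) (lam n \<omega>) (betahat n \<omega>)"
  shows "bigOP M (\<lambda>n \<omega>. norm2n n (p n) (x n) (\<lambda>j. betahat n \<omega> j - beta0 n j))
           (\<lambda>n. sig n * sqrt (real (s n) * ln (real (p n)) / real n) + cs n)"
proof -
  obtain c'' where c''1: "c'' > 1" and G: "\<forall>e>0. \<exists>C1\<ge>0. \<exists>N. \<forall>n\<ge>N. \<exists>A\<in>sets (M n). 1 - e \<le> measure (M n) A \<and>
     (\<forall>\<omega>\<in>A. c'' * real n * linf (p n) (Svec n (x n) (\<lambda>i. eps n i \<omega>)) \<le> lam n \<omega> \<and>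
             lam n \<omega> \<le> C1 * (sig n * sqrt (real n * ln (real (p n)))))"
    using good_event[OF prob sigma_pos noise_indep noise_normal p_lim normalized c_gt lambda_choice] by blast
  obtain CR where R: "\<forall>\<^sub>F n in sequentially.
          0 < kappa n (p n) (x n) (T n) (real (s n) * ln (real n)) \<and>
          1 / kappa n (p n) (x n) (T n) (real (s n) * ln (real n)) \<le> CR \<and>
          phi n (p n) (x n) (T n) (real (s n) * ln (real n)) \<le> CR \<and>
          mu n (p n) (x n) (T n) (real (s n) * ln (real n)) \<le> CR"
    using RSE by blast
  have CR0: "0 < CR"
  proof -
    obtain n0 where "0 < kappa n0 (p n0) (x n0) (T n0) (real (s n0) * ln (real n0))"
        "1 / kappa n0 (p n0) (x n0) (T n0) (real (s n0) * ln (real n0)) \<le> CR"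
      using eventually_happens'[OF trivial_limit_sequentially R] by blast
    thus ?thesis by (smt (verit) divide_pos_pos)
  qed
  define cb where "cb = (c'' + 1) / (c'' - 1)"
  have cb0: "0 \<le> cb" unfolding cb_def using c''1 by simp
  define X where "X = max 2 (2 * (2 * CR * sqrt CR * (cb + 1))\<^sup>2)"
  have p1ev: "eventually (\<lambda>n. 1 \<le> p n) sequentially" using p_lim by (simp add: filterlim_at_top)
  have "eventually (\<lambda>n. 1 \<le> n \<and> 1 \<le> p n \<and> X \<le> ln (real n) \<and>
          (0 < kappa n (p n) (x n) (T n) (real (s n) * ln (real n)) \<and>
          1 / kappa n (p n) (x n) (T n) (real (s n) * ln (real n)) \<le> CR \<and>
          phi n (p n) (x n) (T n) (real (s n) * ln (real n)) \<le> CR \<and>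
          mu n (p n) (x n) (T n) (real (s n) * ln (real n)) \<le> CR)) sequentially"
    by (intro eventually_conj eventually_ge_at_top p1ev ev_ln R)
  then obtain N1 where N1: "\<And>n. n \<ge> N1 \<Longrightarrow> 1 \<le> n \<and> 1 \<le> p n \<and> X \<le> ln (real n) \<and>
          (0 < kappa n (p n) (x n) (T n) (real (s n) * ln (real n)) \<and>
          1 / kappa n (p n) (x n) (T n) (real (s n) * ln (real n)) \<le> CR \<and>
          phi n (p n) (x n) (T n) (real (s n) * ln (real n)) \<le> CR \<and>
          mu n (p n) (x n) (T n) (real (s n) * ln (real n)) \<le> CR)"
    unfolding eventually_sequentially by blast
  show ?thesis
    unfolding bigOP_def
  proof (intro allI impI)
    fix e :: real assume e0: "0 < e"
    obtain C1 N0 where C10: "0 \<le> C1" and N0: "\<forall>n\<ge>N0. \<exists>A\<in>sets (M n). 1 - e \<le> measure (M n) A \<and>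
     (\<forall>\<omega>\<in>A. c'' * real n * linf (p n) (Svec n (x n) (\<lambda>i. eps n i \<omega>)) \<le> lam n \<omega> \<and>
             lam n \<omega> \<le> C1 * (sig n * sqrt (real n * ln (real (p n)))))"
      using G e0 by blast
    show "\<exists>C N. \<forall>n\<ge>N. \<exists>A\<in>sets (M n). 1 - e \<le> measure (M n) A \<and>
       (\<forall>\<omega>\<in>A. \<bar>norm2n n (p n) (x n) (\<lambda>j. betahat n \<omega> j - beta0 n j)\<bar>
          \<le> C * (sig n * sqrt (real (s n) * ln (real (p n)) / real n) + cs n))"
    proof (intro exI[of _ "max 4 (8 * CR * C1)"] exI[of _ "max N0 N1"] allI impI)
      fix n assume nN: "max N0 N1 \<le> n"
      hence nN0: "N0 \<le> n" and nN1: "N1 \<le> n" by auto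
      note H = N1[OF nN1]
      have n1: "1 \<le> n" and p1: "1 \<le> p n" and lnX: "X \<le> ln (real n)" using H by auto
      have kpos: "0 < kappa n (p n) (x n) (T n) (real (s n) * ln (real n))"
        and kC: "1 / kappa n (p n) (x n) (T n) (real (s n) * ln (real n)) \<le> CR"
        and phC: "phi n (p n) (x n) (T n) (real (s n) * ln (real n)) \<le> CR" using H by auto
      obtain A where A: "A \<in> sets (M n)" "1 - e \<le> measure (M n) A"
        and Aw: "\<forall>\<omega>\<in>A. c'' * real n * linf (p n) (Svec n (x n) (\<lambda>i. eps n i \<omega>)) \<le> lam n \<omega> \<and>
             lam n \<omega> \<le> C1 * (sig n * sqrt (real n * ln (real (p n))))"
        using N0 nN0 by blast
      have b0v: "beta0 n \<in> vecs (p n)" using beta0_opt[OF n1] unfolding oracle_sol_def by simp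
      have nrm: "\<And>j. j < p n \<Longrightarrow> En n (\<lambda>i. (x n i j)\<^sup>2) = 1" using normalized[OF n1] .
      define k where "k = nat \<lfloor>real (s n) * ln (real n)\<rfloor>"
      have sm: "card (supp (p n) (beta0 n)) \<ge> 1 \<Longrightarrow> k \<ge> 1 \<and> real k \<le> real (s n) * ln (real n) \<and>
         sqrt (phi n (p n) (x n) (supp (p n) (beta0 n)) (real (s n) * ln (real n))) * ((c'' + 1) / (c'' - 1)) *
           sqrt (real (card (supp (p n) (beta0 n))) / real k)
         \<le> kappa n (p n) (x n) (supp (p n) (beta0 n)) (real (s n) * ln (real n)) / 2"
      proof -
        assume s1: "card (supp (p n) (beta0 n)) \<ge> 1"
        have sc: "s n = card (supp (p n) (beta0 n))" unfolding s_def l0_def by simp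
        have ln2: "2 \<le> ln (real n)" using lnX unfolding X_def by simp
        have lnbig: "2 * (2 * CR * sqrt CR * (cb + 1))\<^sup>2 \<le> ln (real n)" using lnX unfolding X_def by simp
        show ?thesis
          using small_lemma[OF CR0 cb0 s1 kpos[unfolded T_def] kC[unfolded T_def] phC[unfolded T_def] ln2 lnbig]
          unfolding k_def sc cb_def by blast
      qed
      show "\<exists>A\<in>sets (M n). 1 - e \<le> measure (M n) A \<and>
       (\<forall>\<omega>\<in>A. \<bar>norm2n n (p n) (x n) (\<lambda>j. betahat n \<omega> j - beta0 n j)\<bar>
          \<le> max 4 (8 * CR * C1) * (sig n * sqrt (real (s n) * ln (real (p n)) / real n) + cs n))"
      proof (rule bexI[OF _ A(1)], intro conjI ballI A(2))
        fix \<omega> assume w: "\<omega> \<in> A"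
        have wsp: "\<omega> \<in> space (M n)" using A(1) w sets.sets_into_space by blast
        have lw: "c'' * real n * linf (p n) (Svec n (x n) (\<lambda>i. eps n i \<omega>)) \<le> lam n \<omega>"
          and lu: "lam n \<omega> \<le> C1 * (sig n * sqrt (real n * ln (real (p n))))" using Aw w by auto
        have "norm2n n (p n) (x n) (\<lambda>j. betahat n \<omega> j - beta0 n j) \<le> max 4 (8 * CR * C1) *
           (sig n * sqrt (real (card (supp (p n) (beta0 n))) * ln (real (p n)) / real n) +
            sqrt (En n (\<lambda>i. (f n i - xb (x n) (p n) i (beta0 n))\<^sup>2)))"
          by (rule det_rate[OF n1 p1 nrm lasso[OF n1 wsp] b0v c''1 lw lu C10 sigma_pos
                kpos[unfolded T_def] kC[unfolded T_def] sm])
        moreover have "s n = card (supp (p n) (beta0 n))" unfolding s_def l0_def by simp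
        ultimately show "\<bar>norm2n n (p n) (x n) (\<lambda>j. betahat n \<omega> j - beta0 n j)\<bar>
          \<le> max 4 (8 * CR * C1) * (sig n * sqrt (real (s n) * ln (real (p n)) / real n) + cs n)"
          unfolding cs_def using norm2n_nonneg by simp
      qed
    qed
  qed
qed


end
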